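(* Let $P=P_1\otimes\cdots\otimes P_n$ and $Q=Q_1\otimes\cdots\otimes Q_n$ be product distributions on $[q]^n$ with $P\neq Q$, and let $\mathcal C$ be a coordinate-wise greedy coupling of $P$ and $Q$. Then one can draw an exact sample from the distribution $\pi$ on $[q]^n$ defined by $\pi(\omega)=\Pr_{(X,Y)\sim\mathcal C}[X=\omega\mid X\neq Y]$ in $O(n)$ time (the hidden constant being linear in $q$).
   Context: $d_{TV}(P,Q)=\frac12\sum_{\omega}|P(\omega)-Q(\omega)|$. A coordinate-wise greedy coupling $\mathcal C$ of $P$ and $Q$ is a distribution on pairs $(X,Y)\in[q]^n\times[q]^n$ of the form $\mathcal C=\mathcal C_1\otimes\cdots\otimes\mathcal C_n$ (coordinates $(X_i,Y_i)$ mutually independent), where each $\mathcal C_i$ is a coupling of $P_i$ and $Q_i$ satisfying $\Pr_{\mathcal C_i}[X_i=Y_i=c]=\min\{P_i(c),Q_i(c)\}$ for every $c\in[q]$. Since $P\ne Q$, $\Pr_{\mathcal C}[X\neq Y]>0$, so $\pi$ is well defined (and depends only on $P$ and $Q$). Inputs are the marginals $P_i(c),Q_i(c)$; arithmetic operations cost $O(1)$ time. *)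

theory Defs
  imports "HOL-Probability.Probability"
begin

text \<open>[q] = {0..<q}. A product distribution P = P_1 x ... x P_n is given by its marginals
  P i c (i < n, c < q). Points of [q]^n are lists of length n with entries < q.\<close>

definition cube :: "nat \<Rightarrow> nat \<Rightarrow> nat list set" where
  "cube n q = {w. length w = n \<and> (\<forall>i<n. w ! i < q)}"

definition is_dist :: "nat \<Rightarrow> (nat \<Rightarrow> real) \<Rightarrow> bool" where
  "is_dist q p \<longleftrightarrow> (\<forall>c<q. 0 \<le> p c) \<and> (\<Sum>c<q. p c) = 1"

definition is_product_dist :: "nat \<Rightarrow> nat \<Rightarrow> (nat \<Rightarrow> nat \<Rightarrow> real) \<Rightarrow> bool" where
  "is_product_dist n q P \<longleftrightarrow> (\<forall>i<n. is_dist q (P i))"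

definition prod_mass :: "nat \<Rightarrow> (nat \<Rightarrow> nat \<Rightarrow> real) \<Rightarrow> nat list \<Rightarrow> real" where
  "prod_mass n P w = (\<Prod>i<n. P i (w ! i))"

text \<open>Cpl i a b = Pr[(X_i, Y_i) = (a, b)]. The coupling of P and Q is the product of the Cpl i.\<close>

definition is_greedy_coupling_coord ::
    "nat \<Rightarrow> (nat \<Rightarrow> real) \<Rightarrow> (nat \<Rightarrow> real) \<Rightarrow> (nat \<Rightarrow> nat \<Rightarrow> real) \<Rightarrow> bool" where
  "is_greedy_coupling_coord q p r C \<longleftrightarrow>
     (\<forall>a<q. \<forall>b<q. 0 \<le> C a b) \<and>
     (\<forall>a<q. (\<Sum>b<q. C a b) = p a) \<and>
     (\<forall>b<q. (\<Sum>a<q. C a b) = r b) \<and>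
     (\<forall>c<q. C c c = min (p c) (r c))"

definition is_greedy_coupling ::
    "nat \<Rightarrow> nat \<Rightarrow> (nat \<Rightarrow> nat \<Rightarrow> real) \<Rightarrow> (nat \<Rightarrow> nat \<Rightarrow> real)
       \<Rightarrow> (nat \<Rightarrow> nat \<Rightarrow> nat \<Rightarrow> real) \<Rightarrow> bool" where
  "is_greedy_coupling n q P Q Cpl \<longleftrightarrow> (\<forall>i<n. is_greedy_coupling_coord q (P i) (Q i) (Cpl i))"

definition coupling_mass :: "nat \<Rightarrow> (nat \<Rightarrow> nat \<Rightarrow> nat \<Rightarrow> real) \<Rightarrow> nat list \<Rightarrow> nat list \<Rightarrow> real" where
  "coupling_mass n Cpl w v = (\<Prod>i<n. Cpl i (w ! i) (v ! i))"

definition joint_neq :: "nat \<Rightarrow> nat \<Rightarrow> (nat \<Rightarrow> nat \<Rightarrow> nat \<Rightarrow> real) \<Rightarrow> nat list \<Rightarrow> real" where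
  "joint_neq n q Cpl w = (\<Sum>v\<in>cube n q - {w}. coupling_mass n Cpl w v)"

definition pi_cond :: "nat \<Rightarrow> nat \<Rightarrow> (nat \<Rightarrow> nat \<Rightarrow> nat \<Rightarrow> real) \<Rightarrow> nat list \<Rightarrow> real" where
  "pi_cond n q Cpl w = joint_neq n q Cpl w / (\<Sum>u\<in>cube n q. joint_neq n q Cpl u)"

text \<open>Each instruction costs one time step.\<close>

datatype aop = Plus | Minus | Times | Divide

datatype instr =
    Const nat int
  | Arith aop nat nat nat
  | Load nat nat
  | Store nat nat
  | JmpLe nat nat nat
  | Flip nat nat
  | Halt

type_synonym config = "nat \<times> (nat \<Rightarrow> real)"

fun eval_aop :: "aop \<Rightarrow> real \<Rightarrow> real \<Rightarrow> real" where
  "eval_aop Plus x y = x + y"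
| "eval_aop Minus x y = x - y"
| "eval_aop Times x y = x * y"
| "eval_aop Divide x y = x / y"

definition halted :: "instr list \<Rightarrow> config \<Rightarrow> bool" where
  "halted prog s \<longleftrightarrow> fst s \<ge> length prog \<or> prog ! fst s = Halt"

definition step :: "instr list \<Rightarrow> config \<Rightarrow> config pmf" where
  "step prog s = (case s of (pc, m) \<Rightarrow>
     if halted prog s then return_pmf s else
     (case prog ! pc of
        Const r k \<Rightarrow> return_pmf (Suc pc, m(r := of_int k))
      | Arith f r a b \<Rightarrow> return_pmf (Suc pc, m(r := eval_aop f (m a) (m b)))
      | Load r a \<Rightarrow> return_pmf (Suc pc, m(r := m (nat \<lfloor>m a\<rfloor>)))
      | Store a r \<Rightarrow> return_pmf (Suc pc, m(nat \<lfloor>m a\<rfloor> := m r))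
      | JmpLe a b t \<Rightarrow> return_pmf (if m a \<le> m b then t else Suc pc, m)
      | Flip r a \<Rightarrow> map_pmf (\<lambda>bit. (Suc pc, m(r := (if bit then 1 else 0))))
                       (bernoulli_pmf (max 0 (min 1 (m a))))
      | Halt \<Rightarrow> return_pmf s))"

fun exec :: "instr list \<Rightarrow> nat \<Rightarrow> config \<Rightarrow> config pmf" where
  "exec prog 0 s = return_pmf s"
| "exec prog (Suc k) s = bind_pmf (exec prog k s) (step prog)"

definition input_mem :: "nat \<Rightarrow> nat \<Rightarrow> (nat \<Rightarrow> nat \<Rightarrow> real) \<Rightarrow> (nat \<Rightarrow> nat \<Rightarrow> real) \<Rightarrow> nat \<Rightarrow> real" where
  "input_mem n q P Q j =
     (if j = 0 then real n
      else if j = 1 then real q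
      else if 2 \<le> j \<and> j < 2 + n * q then P ((j - 2) div q) ((j - 2) mod q)
      else if 2 + n * q \<le> j \<and> j < 2 + 2 * n * q then Q ((j - 2 - n * q) div q) ((j - 2 - n * q) mod q)
      else 0)"

definition outputs :: "instr list \<Rightarrow> nat \<Rightarrow> nat list \<Rightarrow> config set" where
  "outputs prog n w = {s. halted prog s \<and> (\<forall>i<n. snd s i = real (w ! i))}"

end

theory Submission
  imports Defs
begin


lemma cube_Suc: "cube (Suc n) q = (\<lambda>(c,v). c # v) ` ({..<q} \<times> cube n q)"
proof (rule set_eqI)
  fix w show "w \<in> cube (Suc n) q \<longleftrightarrow> w \<in> (\<lambda>(c,v). c # v) ` ({..<q} \<times> cube n q)"
  proof
    assume "w \<in> cube (Suc n) q"
    then obtain c v where w: "w = c # v" and l: "length v = n" and h: "\<forall>i<Suc n. w!i < q"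
      unfolding cube_def by (cases w) auto
    have "c < q" using h w by auto
    moreover have "\<forall>i<n. v!i < q" using h w by auto
    ultimately show "w \<in> (\<lambda>(c,v). c # v) ` ({..<q} \<times> cube n q)"
      using w l unfolding cube_def by force
  next
    assume "w \<in> (\<lambda>(c,v). c # v) ` ({..<q} \<times> cube n q)"
    then show "w \<in> cube (Suc n) q" unfolding cube_def
      by (auto simp: less_Suc_eq_0_disj)
  qed
qed

lemma finite_cube: "finite (cube n q)"
proof -
  have "cube n q \<subseteq> {xs. set xs \<subseteq> {..<q} \<and> length xs = n}"
    unfolding cube_def by (auto simp: in_set_conv_nth)
  thus ?thesis by (rule finite_subset) (simp add: finite_lists_length_eq)
qed

lemma sum_cube_prod:
  "(\<Sum>v\<in>cube n q. \<Prod>i<n. f i (v!i)) = (\<Prod>i<n. \<Sum>c<q. (f i c :: real))"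
proof (induction n arbitrary: f)
  case 0
  have "cube 0 q = {[]}" unfolding cube_def by auto
  thus ?case by simp
next
  case (Suc n)
  have inj: "inj_on (\<lambda>(c,v). c # v) ({..<q} \<times> cube n q)" by (auto simp: inj_on_def)
  have "(\<Sum>v\<in>cube (Suc n) q. \<Prod>i<Suc n. f i (v!i))
     = (\<Sum>x\<in>{..<q} \<times> cube n q. \<Prod>i<Suc n. f i ((case x of (c,v) \<Rightarrow> c # v)!i))"
    unfolding cube_Suc by (subst sum.reindex[OF inj]) (simp add: comp_def)
  also have "\<dots> = (\<Sum>c<q. \<Sum>v\<in>cube n q. f 0 c * (\<Prod>i<n. f (Suc i) (v!i)))"
    unfolding sum.cartesian_product by (rule sum.cong) (auto simp del: prod.lessThan_Suc simp add: prod.lessThan_Suc_shift)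
  also have "\<dots> = (\<Sum>c<q. f 0 c) * (\<Prod>i<n. \<Sum>c<q. f (Suc i) c)"
    using Suc.IH[of "\<lambda>i. f (Suc i)"] by (simp add: sum_distrib_left[symmetric] sum_distrib_right)
  also have "\<dots> = (\<Prod>i<Suc n. \<Sum>c<q. f i c)" by (simp del: prod.lessThan_Suc add: prod.lessThan_Suc_shift)
  finally show ?case .
qed

lemma joint_neq_formula:
  assumes g: "is_greedy_coupling n q P Q Cpl" and w: "w \<in> cube n q"
  shows "joint_neq n q Cpl w = (\<Prod>i<n. P i (w!i)) - (\<Prod>i<n. min (P i (w!i)) (Q i (w!i)))"
proof -
  have wl: "\<forall>i<n. w!i < q" using w unfolding cube_def by auto
  have "joint_neq n q Cpl w = (\<Sum>v\<in>cube n q. coupling_mass n Cpl w v) - coupling_mass n Cpl w w"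
    unfolding joint_neq_def using w finite_cube by (simp add: sum_diff1)
  also have "(\<Sum>v\<in>cube n q. coupling_mass n Cpl w v) = (\<Prod>i<n. \<Sum>c<q. Cpl i (w!i) c)"
    unfolding coupling_mass_def by (rule sum_cube_prod)
  also have "\<dots> = (\<Prod>i<n. P i (w!i))"
    using g wl unfolding is_greedy_coupling_def is_greedy_coupling_coord_def by (intro prod.cong) auto
  also have "coupling_mass n Cpl w w = (\<Prod>i<n. min (P i (w!i)) (Q i (w!i)))"
    using g wl unfolding coupling_mass_def is_greedy_coupling_def is_greedy_coupling_coord_def
    by (intro prod.cong) auto
  finally show ?thesis .
qed

lemma sum_joint_neq:
  assumes g: "is_greedy_coupling n q P Q Cpl" and d: "is_product_dist n q P"
  shows "(\<Sum>u\<in>cube n q. joint_neq n q Cpl u) = 1 - (\<Prod>i<n. \<Sum>c<q. min (P i c) (Q i c))"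
proof -
  have "(\<Sum>u\<in>cube n q. joint_neq n q Cpl u) =
      (\<Sum>u\<in>cube n q. (\<Prod>i<n. P i (u!i)) - (\<Prod>i<n. min (P i (u!i)) (Q i (u!i))))"
    by (rule sum.cong) (auto simp: joint_neq_formula[OF g])
  also have "\<dots> = (\<Prod>i<n. \<Sum>c<q. P i c) - (\<Prod>i<n. \<Sum>c<q. min (P i c) (Q i c))"
    by (simp add: sum_subtractf sum_cube_prod[where f="\<lambda>i c. P i c"]
        sum_cube_prod[where f="\<lambda>i c. min (P i c) (Q i c)"])
  also have "(\<Prod>i<n. \<Sum>c<q. P i c) = 1"
    using d unfolding is_product_dist_def is_dist_def by (intro prod.neutral) auto
  finally show ?thesis .
qed

lemma pi_cond_formula:
  assumes g: "is_greedy_coupling n q P Q Cpl" and d: "is_product_dist n q P" and w: "w \<in> cube n q"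
  shows "pi_cond n q Cpl w = ((\<Prod>i<n. P i (w!i)) - (\<Prod>i<n. min (P i (w!i)) (Q i (w!i))))
            / (1 - (\<Prod>i<n. \<Sum>c<q. min (P i c) (Q i c)))"
  unfolding pi_cond_def using joint_neq_formula[OF g w] sum_joint_neq[OF g d] by simp

lemma sum_min_le1:
  assumes "is_dist q p" shows "(\<Sum>c<q. min (p c) (r c)) \<le> 1" "0 \<le> (\<Sum>c<q. min (p c) (r c)) \<or> True"
proof -
  have "(\<Sum>c<q. min (p c) (r c)) \<le> (\<Sum>c<q. p c)" by (rule sum_mono) auto
  thus "(\<Sum>c<q. min (p c) (r c)) \<le> 1" using assms unfolding is_dist_def by simp
qed simp

lemma sum_min_nonneg:
  assumes "is_dist q p" "is_dist q r" shows "0 \<le> (\<Sum>c<q. min (p c) (r c))"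
  using assms unfolding is_dist_def by (intro sum_nonneg) auto

lemma sum_min_eq1:
  assumes "is_dist q p" "is_dist q r" "(\<Sum>c<q. min (p c) (r c)) = 1" "c < q"
  shows "min (p c) (r c) = p c" "min (p c) (r c) = r c"
proof -
  have "(\<Sum>c<q. p c - min (p c) (r c)) = 0" using assms unfolding is_dist_def by (simp add: sum_subtractf)
  hence "\<forall>c\<in>{..<q}. p c - min (p c) (r c) = 0" by (subst (asm) sum_nonneg_eq_0_iff) auto
  thus "min (p c) (r c) = p c" using assms(4) by auto
  have "(\<Sum>c<q. r c - min (p c) (r c)) = 0" using assms unfolding is_dist_def by (simp add: sum_subtractf)
  hence "\<forall>c\<in>{..<q}. r c - min (p c) (r c) = 0" by (subst (asm) sum_nonneg_eq_0_iff) auto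
  thus "min (p c) (r c) = r c" using assms(4) by auto
qed

lemma prod_eq1_each:
  fixes s :: "nat \<Rightarrow> real"
  assumes "finite A" "\<forall>i\<in>A. 0 \<le> s i \<and> s i \<le> 1" "prod s A = 1" "i \<in> A"
  shows "s i = 1"
proof -
  have "prod s A = s i * prod s (A - {i})" using assms by (simp add: prod.remove)
  moreover have "0 \<le> prod s (A - {i})" "prod s (A - {i}) \<le> 1"
    using assms by (auto intro: prod_nonneg prod_le_1)
  ultimately show ?thesis using assms
    by (metis (no_types, lifting) antisym mult_le_one mult_right_le_one_le nle_le)
qed



lemma exec_Suc': "exec prog (Suc k) s = bind_pmf (step prog s) (exec prog k)"
proof (induction k arbitrary: s)
  case 0 thus ?case by (simp add: bind_return_pmf bind_return_pmf')
next
  case (Suc k)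
  have "exec prog (Suc (Suc k)) s = bind_pmf (exec prog (Suc k) s) (step prog)" by simp
  also have "\<dots> = bind_pmf (bind_pmf (step prog s) (exec prog k)) (step prog)" by (simp only: Suc)
  also have "\<dots> = bind_pmf (step prog s) (\<lambda>x. bind_pmf (exec prog k x) (step prog))" by (simp add: bind_assoc_pmf)
  also have "\<dots> = bind_pmf (step prog s) (exec prog (Suc k))"
    by (rule arg_cong[where f="bind_pmf (step prog s)"]) (simp add: fun_eq_iff)
  finally show ?case .
qed

lemma exec_halted: "halted prog s \<Longrightarrow> exec prog k s = return_pmf s"
proof (induction k)
  case 0 thus ?case by simp
next
  case (Suc k) thus ?case by (cases s) (simp add: step_def bind_return_pmf)
qed

lemma prob_bind_bernoulli:
  assumes "0 \<le> p" "p \<le> 1"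
  shows "measure_pmf.prob (bind_pmf (bernoulli_pmf p) f) E
       = p * measure_pmf.prob (f True) E + (1 - p) * measure_pmf.prob (f False) E"
proof -
  have "emeasure (measure_pmf (bind_pmf (bernoulli_pmf p) f)) E
     = emeasure (measure_pmf (f True)) E * ennreal p + emeasure (measure_pmf (f False)) E * ennreal (1 - p)"
    using assms by simp
  also have "\<dots> = ennreal (p * measure_pmf.prob (f True) E + (1 - p) * measure_pmf.prob (f False) E)"
    using assms by (simp add: measure_pmf.emeasure_eq_measure ennreal_mult[symmetric] ennreal_plus[symmetric]
        mult.commute del: ennreal_plus)
  finally show ?thesis
    by (simp add: measure_pmf.emeasure_eq_measure) (subst (asm) ennreal_inj; use assms in auto)
qed

definition VV :: "instr list \<Rightarrow> config set \<Rightarrow> nat \<Rightarrow> config \<Rightarrow> real" where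
  "VV prog E k s = measure_pmf.prob (exec prog k s) E"

lemma VV_halted: "halted prog s \<Longrightarrow> VV prog E k s = (if s \<in> E then 1 else 0)"
  by (simp add: VV_def exec_halted)

lemma VV_Suc_ret: "step prog s = return_pmf s' \<Longrightarrow> VV prog E (Suc k) s = VV prog E k s'"
  unfolding VV_def by (simp only: exec_Suc') (simp add: bind_return_pmf)

lemma VV_Const: "pc < length prog \<Longrightarrow> prog ! pc = Const r c \<Longrightarrow>
  VV prog E (Suc k) (pc, m) = VV prog E k (Suc pc, m(r := of_int c))"
  by (rule VV_Suc_ret) (simp add: step_def halted_def)
lemma VV_Arith: "pc < length prog \<Longrightarrow> prog ! pc = Arith f r a b \<Longrightarrow>
  VV prog E (Suc k) (pc, m) = VV prog E k (Suc pc, m(r := eval_aop f (m a) (m b)))"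
  by (rule VV_Suc_ret) (simp add: step_def halted_def)
lemma VV_Load: "pc < length prog \<Longrightarrow> prog ! pc = Load r a \<Longrightarrow>
  VV prog E (Suc k) (pc, m) = VV prog E k (Suc pc, m(r := m (nat \<lfloor>m a\<rfloor>)))"
  by (rule VV_Suc_ret) (simp add: step_def halted_def)
lemma VV_Store: "pc < length prog \<Longrightarrow> prog ! pc = Store a r \<Longrightarrow>
  VV prog E (Suc k) (pc, m) = VV prog E k (Suc pc, m(nat \<lfloor>m a\<rfloor> := m r))"
  by (rule VV_Suc_ret) (simp add: step_def halted_def)
lemma VV_Jmp: "pc < length prog \<Longrightarrow> prog ! pc = JmpLe a b t \<Longrightarrow>
  VV prog E (Suc k) (pc, m) = VV prog E k (if m a \<le> m b then t else Suc pc, m)"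
  by (rule VV_Suc_ret) (simp add: step_def halted_def)
lemma VV_Flip: "pc < length prog \<Longrightarrow> prog ! pc = Flip r a \<Longrightarrow>
  VV prog E (Suc k) (pc, m) =
    max 0 (min 1 (m a)) * VV prog E k (Suc pc, m(r := 1))
    + (1 - max 0 (min 1 (m a))) * VV prog E k (Suc pc, m(r := 0))"
  unfolding VV_def apply (simp only: exec_Suc')
  by (simp add: step_def halted_def map_pmf_def bind_assoc_pmf bind_return_pmf prob_bind_bernoulli)


definition theprog :: "instr list" where
  "theprog = [
    Arith Times 0 0 1,
    Arith Plus 0 0 1,
    Arith Plus 0 0 0,
    Arith Plus 0 0 0,
    Arith Plus 0 0 0,
    Arith Plus 0 0 0,
    Store 0 1,
    Arith Divide 1 1 1,
    Arith Plus 0 0 1,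
    Arith Plus 0 0 1,
    Store 0 2,
    Arith Plus 0 0 1,
    Store 0 3,
    Arith Plus 0 0 1,
    Store 0 4,
    Arith Plus 0 0 1,
    Store 0 5,
    Arith Plus 0 0 1,
    Store 0 6,
    Arith Plus 0 0 1,
    Store 0 7,
    Arith Plus 0 0 1,
    Store 0 8,
    Arith Plus 0 0 1,
    Store 0 9,
    Arith Plus 0 0 1,
    Store 0 10,
    Arith Plus 0 0 1,
    Store 0 11,
    Arith Plus 0 0 1,
    Store 0 12,
    Arith Plus 0 0 1,
    Store 0 13,
    Arith Plus 0 0 1,
    Store 0 14,
    Arith Plus 0 0 1,
    Store 0 15,
    Arith Plus 0 0 1,
    Store 0 16,
    Arith Plus 0 0 1,
    Store 0 17,
    Arith Plus 0 0 1,
    Store 0 18,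
    Arith Plus 0 0 1,
    Store 0 19,
    Arith Plus 0 0 1,
    Store 0 20,
    Arith Plus 0 0 1,
    Store 0 21,
    Arith Plus 0 0 1,
    Store 0 22,
    Arith Plus 0 0 1,
    Store 0 23,
    Arith Plus 0 0 1,
    Store 0 24,
    Arith Plus 0 0 1,
    Store 0 25,
    Arith Plus 0 0 1,
    Store 0 26,
    Arith Plus 0 0 1,
    Store 0 27,
    Arith Plus 0 0 1,
    Store 0 28,
    Arith Plus 0 0 1,
    Store 0 29,
    Arith Plus 0 0 1,
    Store 0 30,
    Arith Plus 0 0 1,
    Const 2 31,
    Arith Minus 3 0 2,
    Load 4 3,
    Arith Plus 5 4 4,
    Arith Plus 5 5 5,
    Arith Plus 5 5 5,
    Arith Plus 5 5 5,
    Arith Divide 6 3 5,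
    Arith Minus 6 6 1,
    Arith Times 7 6 4,
    Arith Plus 8 7 7,
    Arith Plus 8 8 1,
    Arith Plus 8 8 1,
    JmpLe 8 2 87,
    Load 5 2,
    Store 0 5,
    Arith Plus 2 2 1,
    Arith Plus 0 0 1,
    JmpLe 1 1 81,
    Const 5 2,
    Arith Plus 9 3 5,
    Arith Plus 10 9 8,
    Arith Plus 11 10 6,
    Arith Plus 11 11 1,
    Arith Plus 28 10 6,
    Store 28 1,
    Arith Times 12 6 1,
    Arith Plus 27 9 7,
    JmpLe 1 12 98,
    JmpLe 1 1 123,
    Arith Minus 27 27 4,
    Arith Minus 28 28 1,
    Const 13 0,
    Const 14 0,
    Arith Times 15 27 1,
    Arith Plus 16 27 7,
    JmpLe 4 14 117,
    Load 17 15,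
    Load 18 16,
    JmpLe 17 18 110,
    Arith Times 19 18 1,
    JmpLe 1 1 112,
    Arith Times 19 17 1,
    Arith Times 19 19 1,
    Arith Plus 13 13 19,
    Arith Plus 14 14 1,
    Arith Plus 15 15 1,
    Arith Plus 16 16 1,
    JmpLe 1 1 104,
    Arith Plus 5 28 1,
    Load 5 5,
    Arith Times 5 5 13,
    Store 28 5,
    Arith Minus 12 12 1,
    JmpLe 1 1 96,
    Const 20 1,
    Const 12 0,
    Arith Times 27 9 1,
    Arith Times 28 10 1,
    Arith Times 29 11 1,
    JmpLe 6 12 181,
    Load 5 28,
    Arith Times 5 20 5,
    Arith Minus 22 1 5,
    Arith Plus 5 28 1,
    Load 5 5,
    Arith Times 5 20 5,
    Arith Minus 21 1 5,
    Const 23 0,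
    Const 13 0,
    Const 24 0,
    Const 14 0,
    Arith Times 15 27 1,
    Arith Plus 16 27 7,
    JmpLe 4 14 173,
    Load 17 15,
    Load 18 16,
    JmpLe 17 18 148,
    Arith Times 19 18 1,
    JmpLe 1 1 150,
    Arith Times 19 17 1,
    Arith Times 19 19 1,
    Arith Times 25 21 19,
    Arith Minus 30 1 23,
    Arith Divide 5 25 22,
    Arith Times 5 30 5,
    Flip 26 5,
    Arith Times 5 26 14,
    Arith Plus 13 13 5,
    Arith Plus 23 23 26,
    Arith Minus 22 22 25,
    Arith Minus 25 17 19,
    Arith Minus 30 1 23,
    Arith Divide 5 25 22,
    Arith Times 5 30 5,
    Flip 26 5,
    Arith Times 5 26 14,
    Arith Plus 13 13 5,
    Arith Plus 23 23 26,
    Arith Plus 24 24 26,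
    Arith Minus 22 22 25,
    Arith Plus 14 14 1,
    Arith Plus 15 15 1,
    Arith Plus 16 16 1,
    JmpLe 1 1 142,
    Store 29 13,
    Arith Times 5 20 24,
    Arith Minus 20 20 5,
    Arith Plus 12 12 1,
    Arith Plus 27 27 4,
    Arith Plus 28 28 1,
    Arith Plus 29 29 1,
    JmpLe 1 1 128,
    Const 12 31,
    Arith Plus 29 11 12,
    JmpLe 6 12 189,
    Load 5 29,
    Store 12 5,
    Arith Plus 12 12 1,
    Arith Plus 29 29 1,
    JmpLe 1 1 183,
    Load 5 11,
    Arith Plus 15 11 11,
    Const 2 2,
    Arith Plus 15 15 2,
    Store 15 5,
    Const 2 30,
    Arith Plus 0 11 2,
    Load 30 0,
    Const 29 1,
    Arith Minus 0 0 29,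
    Load 29 0,
    Const 28 1,
    Arith Minus 0 0 28,
    Load 28 0,
    Const 27 1,
    Arith Minus 0 0 27,
    Load 27 0,
    Const 26 1,
    Arith Minus 0 0 26,
    Load 26 0,
    Const 25 1,
    Arith Minus 0 0 25,
    Load 25 0,
    Const 24 1,
    Arith Minus 0 0 24,
    Load 24 0,
    Const 23 1,
    Arith Minus 0 0 23,
    Load 23 0,
    Const 22 1,
    Arith Minus 0 0 22,
    Load 22 0,
    Const 21 1,
    Arith Minus 0 0 21,
    Load 21 0,
    Const 20 1,
    Arith Minus 0 0 20,
    Load 20 0,
    Const 19 1,
    Arith Minus 0 0 19,
    Load 19 0,
    Const 18 1,
    Arith Minus 0 0 18,
    Load 18 0,
    Const 17 1,
    Arith Minus 0 0 17,
    Load 17 0,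
    Const 16 1,
    Arith Minus 0 0 16,
    Load 16 0,
    Const 15 1,
    Arith Minus 0 0 15,
    Load 15 0,
    Const 14 1,
    Arith Minus 0 0 14,
    Load 14 0,
    Const 13 1,
    Arith Minus 0 0 13,
    Load 13 0,
    Const 12 1,
    Arith Minus 0 0 12,
    Load 12 0,
    Const 11 1,
    Arith Minus 0 0 11,
    Load 11 0,
    Const 10 1,
    Arith Minus 0 0 10,
    Load 10 0,
    Const 9 1,
    Arith Minus 0 0 9,
    Load 9 0,
    Const 8 1,
    Arith Minus 0 0 8,
    Load 8 0,
    Const 7 1,
    Arith Minus 0 0 7,
    Load 7 0,
    Const 6 1,
    Arith Minus 0 0 6,
    Load 6 0,
    Const 5 1,
    Arith Minus 0 0 5,
    Load 5 0,
    Const 4 1,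
    Arith Minus 0 0 4,
    Load 4 0,
    Const 3 1,
    Arith Minus 0 0 3,
    Load 3 0,
    Const 2 1,
    Arith Minus 0 0 2,
    Load 2 0,
    Const 1 1,
    Arith Minus 0 0 1,
    Load 1 0,
    Arith Plus 0 0 0,
    Load 0 0,
    Halt]"

lemma length_prog: "length theprog = 287" by (simp add: theprog_def)

lemma prog_nth:
  "theprog ! 0 = Arith Times 0 0 1"
  "theprog ! 1 = Arith Plus 0 0 1"
  "theprog ! 2 = Arith Plus 0 0 0"
  "theprog ! 3 = Arith Plus 0 0 0"
  "theprog ! 4 = Arith Plus 0 0 0"
  "theprog ! 5 = Arith Plus 0 0 0"
  "theprog ! 6 = Store 0 1"
  "theprog ! 7 = Arith Divide 1 1 1"
  "theprog ! 8 = Arith Plus 0 0 1"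
  "theprog ! 9 = Arith Plus 0 0 1"
  "theprog ! 10 = Store 0 2"
  "theprog ! 11 = Arith Plus 0 0 1"
  "theprog ! 12 = Store 0 3"
  "theprog ! 13 = Arith Plus 0 0 1"
  "theprog ! 14 = Store 0 4"
  "theprog ! 15 = Arith Plus 0 0 1"
  "theprog ! 16 = Store 0 5"
  "theprog ! 17 = Arith Plus 0 0 1"
  "theprog ! 18 = Store 0 6"
  "theprog ! 19 = Arith Plus 0 0 1"
  "theprog ! 20 = Store 0 7"
  "theprog ! 21 = Arith Plus 0 0 1"
  "theprog ! 22 = Store 0 8"
  "theprog ! 23 = Arith Plus 0 0 1"
  "theprog ! 24 = Store 0 9"
  "theprog ! 25 = Arith Plus 0 0 1"
  "theprog ! 26 = Store 0 10"
  "theprog ! 27 = Arith Plus 0 0 1"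
  "theprog ! 28 = Store 0 11"
  "theprog ! 29 = Arith Plus 0 0 1"
  "theprog ! 30 = Store 0 12"
  "theprog ! 31 = Arith Plus 0 0 1"
  "theprog ! 32 = Store 0 13"
  "theprog ! 33 = Arith Plus 0 0 1"
  "theprog ! 34 = Store 0 14"
  "theprog ! 35 = Arith Plus 0 0 1"
  "theprog ! 36 = Store 0 15"
  "theprog ! 37 = Arith Plus 0 0 1"
  "theprog ! 38 = Store 0 16"
  "theprog ! 39 = Arith Plus 0 0 1"
  "theprog ! 40 = Store 0 17"
  "theprog ! 41 = Arith Plus 0 0 1"
  "theprog ! 42 = Store 0 18"
  "theprog ! 43 = Arith Plus 0 0 1"
  "theprog ! 44 = Store 0 19"
  "theprog ! 45 = Arith Plus 0 0 1"
  "theprog ! 46 = Store 0 20"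
  "theprog ! 47 = Arith Plus 0 0 1"
  "theprog ! 48 = Store 0 21"
  "theprog ! 49 = Arith Plus 0 0 1"
  "theprog ! 50 = Store 0 22"
  "theprog ! 51 = Arith Plus 0 0 1"
  "theprog ! 52 = Store 0 23"
  "theprog ! 53 = Arith Plus 0 0 1"
  "theprog ! 54 = Store 0 24"
  "theprog ! 55 = Arith Plus 0 0 1"
  "theprog ! 56 = Store 0 25"
  "theprog ! 57 = Arith Plus 0 0 1"
  "theprog ! 58 = Store 0 26"
  "theprog ! 59 = Arith Plus 0 0 1"
  "theprog ! 60 = Store 0 27"
  "theprog ! 61 = Arith Plus 0 0 1"
  "theprog ! 62 = Store 0 28"
  "theprog ! 63 = Arith Plus 0 0 1"
  "theprog ! 64 = Store 0 29"
  "theprog ! 65 = Arith Plus 0 0 1"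
  "theprog ! 66 = Store 0 30"
  "theprog ! 67 = Arith Plus 0 0 1"
  "theprog ! 68 = Const 2 31"
  "theprog ! 69 = Arith Minus 3 0 2"
  "theprog ! 70 = Load 4 3"
  "theprog ! 71 = Arith Plus 5 4 4"
  "theprog ! 72 = Arith Plus 5 5 5"
  "theprog ! 73 = Arith Plus 5 5 5"
  "theprog ! 74 = Arith Plus 5 5 5"
  "theprog ! 75 = Arith Divide 6 3 5"
  "theprog ! 76 = Arith Minus 6 6 1"
  "theprog ! 77 = Arith Times 7 6 4"
  "theprog ! 78 = Arith Plus 8 7 7"
  "theprog ! 79 = Arith Plus 8 8 1"
  "theprog ! 80 = Arith Plus 8 8 1"
  "theprog ! 81 = JmpLe 8 2 87"
  "theprog ! 82 = Load 5 2"
  "theprog ! 83 = Store 0 5"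
  "theprog ! 84 = Arith Plus 2 2 1"
  "theprog ! 85 = Arith Plus 0 0 1"
  "theprog ! 86 = JmpLe 1 1 81"
  "theprog ! 87 = Const 5 2"
  "theprog ! 88 = Arith Plus 9 3 5"
  "theprog ! 89 = Arith Plus 10 9 8"
  "theprog ! 90 = Arith Plus 11 10 6"
  "theprog ! 91 = Arith Plus 11 11 1"
  "theprog ! 92 = Arith Plus 28 10 6"
  "theprog ! 93 = Store 28 1"
  "theprog ! 94 = Arith Times 12 6 1"
  "theprog ! 95 = Arith Plus 27 9 7"
  "theprog ! 96 = JmpLe 1 12 98"
  "theprog ! 97 = JmpLe 1 1 123"
  "theprog ! 98 = Arith Minus 27 27 4"
  "theprog ! 99 = Arith Minus 28 28 1"
  "theprog ! 100 = Const 13 0"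
  "theprog ! 101 = Const 14 0"
  "theprog ! 102 = Arith Times 15 27 1"
  "theprog ! 103 = Arith Plus 16 27 7"
  "theprog ! 104 = JmpLe 4 14 117"
  "theprog ! 105 = Load 17 15"
  "theprog ! 106 = Load 18 16"
  "theprog ! 107 = JmpLe 17 18 110"
  "theprog ! 108 = Arith Times 19 18 1"
  "theprog ! 109 = JmpLe 1 1 112"
  "theprog ! 110 = Arith Times 19 17 1"
  "theprog ! 111 = Arith Times 19 19 1"
  "theprog ! 112 = Arith Plus 13 13 19"
  "theprog ! 113 = Arith Plus 14 14 1"
  "theprog ! 114 = Arith Plus 15 15 1"
  "theprog ! 115 = Arith Plus 16 16 1"
  "theprog ! 116 = JmpLe 1 1 104"
  "theprog ! 117 = Arith Plus 5 28 1"
  "theprog ! 118 = Load 5 5"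
  "theprog ! 119 = Arith Times 5 5 13"
  "theprog ! 120 = Store 28 5"
  "theprog ! 121 = Arith Minus 12 12 1"
  "theprog ! 122 = JmpLe 1 1 96"
  "theprog ! 123 = Const 20 1"
  "theprog ! 124 = Const 12 0"
  "theprog ! 125 = Arith Times 27 9 1"
  "theprog ! 126 = Arith Times 28 10 1"
  "theprog ! 127 = Arith Times 29 11 1"
  "theprog ! 128 = JmpLe 6 12 181"
  "theprog ! 129 = Load 5 28"
  "theprog ! 130 = Arith Times 5 20 5"
  "theprog ! 131 = Arith Minus 22 1 5"
  "theprog ! 132 = Arith Plus 5 28 1"
  "theprog ! 133 = Load 5 5"
  "theprog ! 134 = Arith Times 5 20 5"
  "theprog ! 135 = Arith Minus 21 1 5"
  "theprog ! 136 = Const 23 0"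
  "theprog ! 137 = Const 13 0"
  "theprog ! 138 = Const 24 0"
  "theprog ! 139 = Const 14 0"
  "theprog ! 140 = Arith Times 15 27 1"
  "theprog ! 141 = Arith Plus 16 27 7"
  "theprog ! 142 = JmpLe 4 14 173"
  "theprog ! 143 = Load 17 15"
  "theprog ! 144 = Load 18 16"
  "theprog ! 145 = JmpLe 17 18 148"
  "theprog ! 146 = Arith Times 19 18 1"
  "theprog ! 147 = JmpLe 1 1 150"
  "theprog ! 148 = Arith Times 19 17 1"
  "theprog ! 149 = Arith Times 19 19 1"
  "theprog ! 150 = Arith Times 25 21 19"
  "theprog ! 151 = Arith Minus 30 1 23"
  "theprog ! 152 = Arith Divide 5 25 22"
  "theprog ! 153 = Arith Times 5 30 5"
  "theprog ! 154 = Flip 26 5"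
  "theprog ! 155 = Arith Times 5 26 14"
  "theprog ! 156 = Arith Plus 13 13 5"
  "theprog ! 157 = Arith Plus 23 23 26"
  "theprog ! 158 = Arith Minus 22 22 25"
  "theprog ! 159 = Arith Minus 25 17 19"
  "theprog ! 160 = Arith Minus 30 1 23"
  "theprog ! 161 = Arith Divide 5 25 22"
  "theprog ! 162 = Arith Times 5 30 5"
  "theprog ! 163 = Flip 26 5"
  "theprog ! 164 = Arith Times 5 26 14"
  "theprog ! 165 = Arith Plus 13 13 5"
  "theprog ! 166 = Arith Plus 23 23 26"
  "theprog ! 167 = Arith Plus 24 24 26"
  "theprog ! 168 = Arith Minus 22 22 25"
  "theprog ! 169 = Arith Plus 14 14 1"
  "theprog ! 170 = Arith Plus 15 15 1"
  "theprog ! 171 = Arith Plus 16 16 1"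
  "theprog ! 172 = JmpLe 1 1 142"
  "theprog ! 173 = Store 29 13"
  "theprog ! 174 = Arith Times 5 20 24"
  "theprog ! 175 = Arith Minus 20 20 5"
  "theprog ! 176 = Arith Plus 12 12 1"
  "theprog ! 177 = Arith Plus 27 27 4"
  "theprog ! 178 = Arith Plus 28 28 1"
  "theprog ! 179 = Arith Plus 29 29 1"
  "theprog ! 180 = JmpLe 1 1 128"
  "theprog ! 181 = Const 12 31"
  "theprog ! 182 = Arith Plus 29 11 12"
  "theprog ! 183 = JmpLe 6 12 189"
  "theprog ! 184 = Load 5 29"
  "theprog ! 185 = Store 12 5"
  "theprog ! 186 = Arith Plus 12 12 1"
  "theprog ! 187 = Arith Plus 29 29 1"
  "theprog ! 188 = JmpLe 1 1 183"
  "theprog ! 189 = Load 5 11"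
  "theprog ! 190 = Arith Plus 15 11 11"
  "theprog ! 191 = Const 2 2"
  "theprog ! 192 = Arith Plus 15 15 2"
  "theprog ! 193 = Store 15 5"
  "theprog ! 194 = Const 2 30"
  "theprog ! 195 = Arith Plus 0 11 2"
  "theprog ! 196 = Load 30 0"
  "theprog ! 197 = Const 29 1"
  "theprog ! 198 = Arith Minus 0 0 29"
  "theprog ! 199 = Load 29 0"
  "theprog ! 200 = Const 28 1"
  "theprog ! 201 = Arith Minus 0 0 28"
  "theprog ! 202 = Load 28 0"
  "theprog ! 203 = Const 27 1"
  "theprog ! 204 = Arith Minus 0 0 27"
  "theprog ! 205 = Load 27 0"
  "theprog ! 206 = Const 26 1"
  "theprog ! 207 = Arith Minus 0 0 26"
  "theprog ! 208 = Load 26 0"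
  "theprog ! 209 = Const 25 1"
  "theprog ! 210 = Arith Minus 0 0 25"
  "theprog ! 211 = Load 25 0"
  "theprog ! 212 = Const 24 1"
  "theprog ! 213 = Arith Minus 0 0 24"
  "theprog ! 214 = Load 24 0"
  "theprog ! 215 = Const 23 1"
  "theprog ! 216 = Arith Minus 0 0 23"
  "theprog ! 217 = Load 23 0"
  "theprog ! 218 = Const 22 1"
  "theprog ! 219 = Arith Minus 0 0 22"
  "theprog ! 220 = Load 22 0"
  "theprog ! 221 = Const 21 1"
  "theprog ! 222 = Arith Minus 0 0 21"
  "theprog ! 223 = Load 21 0"
  "theprog ! 224 = Const 20 1"
  "theprog ! 225 = Arith Minus 0 0 20"
  "theprog ! 226 = Load 20 0"
  "theprog ! 227 = Const 19 1"
  "theprog ! 228 = Arith Minus 0 0 19"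
  "theprog ! 229 = Load 19 0"
  "theprog ! 230 = Const 18 1"
  "theprog ! 231 = Arith Minus 0 0 18"
  "theprog ! 232 = Load 18 0"
  "theprog ! 233 = Const 17 1"
  "theprog ! 234 = Arith Minus 0 0 17"
  "theprog ! 235 = Load 17 0"
  "theprog ! 236 = Const 16 1"
  "theprog ! 237 = Arith Minus 0 0 16"
  "theprog ! 238 = Load 16 0"
  "theprog ! 239 = Const 15 1"
  "theprog ! 240 = Arith Minus 0 0 15"
  "theprog ! 241 = Load 15 0"
  "theprog ! 242 = Const 14 1"
  "theprog ! 243 = Arith Minus 0 0 14"
  "theprog ! 244 = Load 14 0"
  "theprog ! 245 = Const 13 1"
  "theprog ! 246 = Arith Minus 0 0 13"
  "theprog ! 247 = Load 13 0"
  "theprog ! 248 = Const 12 1"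
  "theprog ! 249 = Arith Minus 0 0 12"
  "theprog ! 250 = Load 12 0"
  "theprog ! 251 = Const 11 1"
  "theprog ! 252 = Arith Minus 0 0 11"
  "theprog ! 253 = Load 11 0"
  "theprog ! 254 = Const 10 1"
  "theprog ! 255 = Arith Minus 0 0 10"
  "theprog ! 256 = Load 10 0"
  "theprog ! 257 = Const 9 1"
  "theprog ! 258 = Arith Minus 0 0 9"
  "theprog ! 259 = Load 9 0"
  "theprog ! 260 = Const 8 1"
  "theprog ! 261 = Arith Minus 0 0 8"
  "theprog ! 262 = Load 8 0"
  "theprog ! 263 = Const 7 1"
  "theprog ! 264 = Arith Minus 0 0 7"
  "theprog ! 265 = Load 7 0"
  "theprog ! 266 = Const 6 1"
  "theprog ! 267 = Arith Minus 0 0 6"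
  "theprog ! 268 = Load 6 0"
  "theprog ! 269 = Const 5 1"
  "theprog ! 270 = Arith Minus 0 0 5"
  "theprog ! 271 = Load 5 0"
  "theprog ! 272 = Const 4 1"
  "theprog ! 273 = Arith Minus 0 0 4"
  "theprog ! 274 = Load 4 0"
  "theprog ! 275 = Const 3 1"
  "theprog ! 276 = Arith Minus 0 0 3"
  "theprog ! 277 = Load 3 0"
  "theprog ! 278 = Const 2 1"
  "theprog ! 279 = Arith Minus 0 0 2"
  "theprog ! 280 = Load 2 0"
  "theprog ! 281 = Const 1 1"
  "theprog ! 282 = Arith Minus 0 0 1"
  "theprog ! 283 = Load 1 0"
  "theprog ! 284 = Arith Plus 0 0 0"
  "theprog ! 285 = Load 0 0"
  "theprog ! 286 = Halt"
  by (simp_all add: theprog_def)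


definition fl :: "real \<Rightarrow> real \<Rightarrow> real \<Rightarrow> real" where
  "fl x A B = max 0 (min 1 x) * A + (1 - max 0 (min 1 x)) * B"

fun stepV :: "(config \<Rightarrow> real) \<Rightarrow> instr \<Rightarrow> nat \<Rightarrow> (nat \<Rightarrow> real) \<Rightarrow> real" where
  "stepV f (Const r c) pc m = f (Suc pc, m(r := of_int c))"
| "stepV f (Arith g r a b) pc m = f (Suc pc, m(r := eval_aop g (m a) (m b)))"
| "stepV f (Load r a) pc m = f (Suc pc, m(r := m (nat \<lfloor>m a\<rfloor>)))"
| "stepV f (Store a r) pc m = f (Suc pc, m(nat \<lfloor>m a\<rfloor> := m r))"
| "stepV f (JmpLe a b t) pc m = f (if m a \<le> m b then t else Suc pc, m)"
| "stepV f (Flip r a) pc m = fl (m a) (f (Suc pc, m(r := 1))) (f (Suc pc, m(r := 0)))"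
| "stepV f Halt pc m = f (pc, m)"

lemma VV_step: "pc < length theprog \<Longrightarrow> theprog ! pc \<noteq> Halt \<Longrightarrow>
   VV theprog E (Suc k) (pc, m) = stepV (VV theprog E k) (theprog ! pc) pc m"
  by (cases "theprog ! pc") (simp_all add: VV_Const VV_Arith VV_Load VV_Store VV_Jmp VV_Flip fl_def)

lemma VV_step': "0 < k \<Longrightarrow> pc < length theprog \<Longrightarrow> theprog ! pc \<noteq> Halt \<Longrightarrow>
   VV theprog E k (pc, m) = stepV (VV theprog E (k - 1)) (theprog ! pc) pc m"
  using VV_step[of pc E "k - 1" m] by simp

lemma rn1: "real a + 1 = real (a + 1)" by simp
lemma rn2: "real a + numeral k = real (a + numeral k)" by simp
lemma rn3: "real (a + numeral k) - 1 = real (a + pred_numeral k)"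
  by (simp add: numeral_eq_Suc)
lemma rn4: "real (a + 1) - 1 = real a" by simp
lemma rn5: "nat \<lfloor>real a\<rfloor> = a" by simp
lemma rn6: "real (Suc a) - 1 = real a" by simp

definition mem :: "(nat \<Rightarrow> real) \<Rightarrow> (nat \<Rightarrow> real) \<Rightarrow> nat \<Rightarrow> real" where
  "mem r h a = (if a < 31 then r a else h a)"

definition setr :: "(nat \<Rightarrow> real) \<Rightarrow> nat \<Rightarrow> real \<Rightarrow> nat \<Rightarrow> real" where
  "setr r k v = r(k := v)"
lemma setr_same[simp]: "setr r k v k = v" by (simp add: setr_def)
lemma setr_other[simp]: "j \<noteq> k \<Longrightarrow> setr r k v j = r j" by (simp add: setr_def)

lemma mem_upd: "(mem r h)(a := v) = (if a < 31 then mem (setr r a v) h else mem r (setr h a v))"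
  by (auto simp: mem_def fun_eq_iff setr_def)
lemma mem_app: "mem r h a = (if a < 31 then r a else h a)" by (simp add: mem_def)
lemma mem_self: "m = mem m m" by (simp add: mem_def fun_eq_iff)

lemmas run = VV_step' length_prog prog_nth rn1 rn2 rn3 rn4 rn5 rn6 of_nat_add[symmetric] of_nat_mult[symmetric]
  mem_upd mem_app

lemma prog_fin: "\<forall>i\<in>{1..<30::nat}. theprog ! (197 + 3*(29-i)) = Const i 1 \<and> theprog ! (198 + 3*(29-i)) = Arith Minus 0 0 i
   \<and> theprog ! (199 + 3*(29-i)) = Load i 0"
  by (simp add: prog_nth atLeastLessThan_nat_numeral)



lemma VV_mem: "VV p E k (pc, m) = VV p E k (pc, mem m m)" by (simp add: mem_self[symmetric])

definition Bq :: "nat \<Rightarrow> nat \<Rightarrow> nat" where "Bq n q = 16*(n+1)*q"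
definition DPa :: "nat \<Rightarrow> nat \<Rightarrow> nat" where "DPa n q = Bq n q + 2"
definition TBa :: "nat \<Rightarrow> nat \<Rightarrow> nat" where "TBa n q = Bq n q + 2*n*q + 4"
definition OBa :: "nat \<Rightarrow> nat \<Rightarrow> nat" where "OBa n q = TBa n q + n + 1"

locale setting =
  fixes n q :: nat and P Q :: "nat \<Rightarrow> nat \<Rightarrow> real" and w :: "nat list"
  assumes n1: "1 \<le> n" and q1: "1 \<le> q"
    and dP: "is_product_dist n q P" and dQ: "is_product_dist n q Q" and wc: "w \<in> cube n q"
begin

abbreviation V where "V \<equiv> VV theprog (outputs theprog n w)"

definition Fv :: "(nat \<Rightarrow> real) \<Rightarrow> nat \<Rightarrow> real" where
  "Fv hh z = (if \<forall>j<n. (if j = 0 then hh (2*z+2) else if j \<le> 30 then hh (z + j) else hh j) = real (w!j)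
               then 1 else 0)"

lemma halted_val: "V k (286, m') = (if \<forall>j<n. m' j = real (w!j) then 1 else 0)"
  by (simp add: VV_halted halted_def prog_nth outputs_def)

lemma halted_val2: "V k (286, mem (setr (setr m 0 x) 0 v) m) =
   (if \<forall>j<n. (if j = 0 then v else m j) = real (w!j) then 1 else 0)"
  unfolding halted_val by (simp add: mem_def setr_def)

lemma fin_reg:
  assumes "i \<le> 29" "m 0 = real (z + i + 1)" "\<forall>a\<ge>31. m a = hh a"
    "\<forall>j. i < j \<longrightarrow> j \<le> 30 \<longrightarrow> m j = hh (z + j)" "z \<ge> 31"
  shows "V (3*i + 2 + k) (197 + 3*(29-i), m) = Fv hh z"
  using assms
proof (induction i arbitrary: m)
  case 0
  then show ?case
    apply (subst VV_mem)
    apply (simp add: run del: of_nat_add of_nat_mult of_nat_Suc)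
    apply (simp only: halted_val2 Fv_def)
    apply (rule arg_cong[where f="\<lambda>b. if b then 1 else 0"])
    apply (rule all_cong)
    apply (simp add: mult_2)
    done
next
  case (Suc i)
  have i: "i \<le> 28" using Suc.prems by simp
  have I: "theprog ! (197 + 3*(28-i)) = Const (Suc i) 1" "theprog ! (198 + 3*(28-i)) = Arith Minus 0 0 (Suc i)"
     "theprog ! (199 + 3*(28-i)) = Load (Suc i) 0"
    using prog_fin[rule_format, of "Suc i"] i by auto
  define m1 where "m1 = m(Suc i := 1)"
  define m2 where "m2 = m1(0 := m1 0 - m1 (Suc i))"
  define m3 where "m3 = m2(Suc i := m2 (nat \<lfloor>m2 0\<rfloor>))"
  have e: "3 * Suc i + 2 + k = Suc (Suc (Suc (3*i + 2 + k)))" by simp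
  have pc: "197 + 3 * (29 - Suc i) = 197 + 3*(28-i)" by simp
  have "V (3 * Suc i + 2 + k) (197 + 3 * (29 - Suc i), m)
      = V (Suc (Suc (3*i + 2 + k))) (Suc (197 + 3*(28-i)), m1)"
    unfolding e pc m1_def by (rule VV_Const[where c=1, simplified]) (use i I in \<open>simp_all add: length_prog\<close>)
  also have "\<dots> = V (Suc (3*i + 2 + k)) (Suc (Suc (197 + 3*(28-i))), m2)"
    unfolding m2_def by (rule VV_Arith[where f=Minus, simplified]) (use i I in \<open>simp_all add: length_prog\<close>)
  also have "\<dots> = V (3*i + 2 + k) (Suc (Suc (Suc (197 + 3*(28-i)))), m3)"
    unfolding m3_def by (rule VV_Load) (use i I in \<open>simp_all add: length_prog\<close>)
  also have "Suc (Suc (Suc (197 + 3*(28-i)))) = 197 + 3*(29-i)" using i by simp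
  also have "V (3*i + 2 + k) (197 + 3*(29-i), m3) = Fv hh z"
  proof (rule Suc.IH)
    have "m2 0 = real (z + i + 1)" using Suc.prems unfolding m2_def m1_def by simp
    hence "nat \<lfloor>m2 0\<rfloor> = z + i + 1" by simp
    thus "m3 0 = real (z + i + 1)" "\<forall>a\<ge>31. m3 a = hh a" "\<forall>j. i < j \<longrightarrow> j \<le> 30 \<longrightarrow> m3 j = hh (z + j)"
      using Suc.prems unfolding m3_def m2_def m1_def by auto
  qed (use Suc.prems in auto)
  finally show ?case .
qed

lemma fin_reg29:
  assumes "m 0 = real (z + 30)" "\<forall>a\<ge>31. m a = hh a" "m 30 = hh (z + 30)" "z \<ge> 31"
  shows "V (89 + k) (197, m) = Fv hh z"
proof -
  have "\<forall>j. 29 < j \<longrightarrow> j \<le> 30 \<longrightarrow> m j = hh (z + j)"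
  proof (intro allI impI)
    fix j :: nat assume "29 < j" "j \<le> 30" hence "j = 30" by simp
    thus "m j = hh (z + j)" using assms by simp
  qed
  thus ?thesis using fin_reg[of 29 m z hh k] assms by simp
qed

lemma fin8:
  assumes "m 11 = real z" "z \<ge> 31"
  shows "\<exists>m'. V (8 + K) (189, m) = V K (197, m') \<and> m' 0 = real (z + 30) \<and> m' 30 = m (z + 30)
     \<and> (\<forall>a\<ge>31. m' a = (m(2*z+2 := m z)) a)"
  using assms
  apply (subst VV_mem)
  apply (simp add: run del: of_nat_add of_nat_mult of_nat_Suc)
  apply (intro exI conjI)
  apply (rule refl)
  apply (simp_all add: mem_def setr_def)
  done

lemma fin:
  assumes "m 11 = real z" "z \<ge> 31" "z > n" "\<forall>j<n. m (z + j) = ov j" "\<forall>j. 31 \<le> j \<longrightarrow> j < n \<longrightarrow> m j = ov j"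
  shows "V (97 + k) (189, m) = (if \<forall>j<n. ov j = real (w!j) then 1 else 0)"
proof -
  obtain m' where m': "V (8 + (89 + k)) (189, m) = V (89 + k) (197, m')" "m' 0 = real (z + 30)"
     "m' 30 = m (z + 30)" "\<forall>a\<ge>31. m' a = (m(2*z+2 := m z)) a"
    using fin8[of m z "89 + k"] assms by blast
  have "V (97 + k) (189, m) = Fv (m(2*z+2 := m z)) z"
    using m' fin_reg29[of m' z "m(2*z+2 := m z)" k] assms(2) by simp
  also have "\<dots> = (if \<forall>j<n. ov j = real (w!j) then 1 else 0)"
    unfolding Fv_def
  proof (rule arg_cong[where f="\<lambda>b. if b then 1 else 0"], rule all_cong)
    fix j assume j: "j < n"
    have "(if j = 0 then (m(2*z+2 := m z)) (2*z+2) else if j \<le> 30 then (m(2*z+2 := m z)) (z + j)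
           else (m(2*z+2 := m z)) j) = ov j"
      using assms j by auto
    thus "((if j = 0 then (m(2*z+2 := m z)) (2*z+2) else if j \<le> 30 then (m(2*z+2 := m z)) (z + j)
           else (m(2*z+2 := m z)) j) = real (w!j)) = (ov j = real (w!j))" by simp
  qed
  finally show ?thesis .
qed

definition inv4 :: "nat \<Rightarrow> nat \<Rightarrow> (nat \<Rightarrow> real) \<Rightarrow> (nat \<Rightarrow> real) \<Rightarrow> bool" where
  "inv4 z i ov m \<longleftrightarrow> m 1 = 1 \<and> m 6 = real n \<and> m 11 = real z \<and> m 12 = real i \<and> m 29 = real (z + i)
     \<and> (\<forall>j<n. m (z + j) = ov j) \<and> (\<forall>j. 31 \<le> j \<longrightarrow> j < i \<longrightarrow> j < n \<longrightarrow> m j = ov j)"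

lemma p4_exit:
  assumes "inv4 z i ov m" "n \<le> i" "z \<ge> 31" "z > n"
  shows "V (98 + k) (183, m) = (if \<forall>j<n. ov j = real (w!j) then 1 else 0)"
proof -
  have "V (Suc (97 + k)) (183, m) = V (97 + k) (189, m)"
    using assms unfolding inv4_def by (subst VV_step) (simp_all add: length_prog prog_nth)
  also have "\<dots> = (if \<forall>j<n. ov j = real (w!j) then 1 else 0)"
    by (rule fin) (use assms in \<open>auto simp: inv4_def\<close>)
  finally show ?thesis by simp
qed

lemma p4_body:
  assumes "inv4 z i ov m" "i < n" "31 \<le> i" "z > n"
  shows "\<exists>m'. V (6 + K) (183, m) = V K (183, m') \<and> inv4 z (i+1) ov m'"
  using assms unfolding inv4_def
  apply (subst VV_mem)
  apply (simp add: run del: of_nat_add of_nat_mult of_nat_Suc)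
  apply (intro exI conjI)
  apply (rule refl)
  apply (simp_all add: mem_app)
  apply (auto simp: setr_def less_Suc_eq)
  done

lemma p4_loop:
  assumes "inv4 z i ov m" "31 \<le> i" "z \<ge> 31" "z > n"
  shows "V (6 * (n - i) + 98 + k) (183, m) = (if \<forall>j<n. ov j = real (w!j) then 1 else 0)"
  using assms
proof (induction "n - i" arbitrary: i m)
  case 0
  thus ?case using p4_exit[of z i ov m k] by simp
next
  case (Suc d)
  hence i: "i < n" by simp
  obtain m' where m': "V (6 + (6 * (n - (i+1)) + 98 + k)) (183, m) = V (6 * (n - (i+1)) + 98 + k) (183, m')"
     "inv4 z (i+1) ov m'"
    using p4_body[OF Suc.prems(1) i Suc.prems(2,4)] by blast
  have e: "6 * (n - i) + 98 + k = 6 + (6 * (n - (i+1)) + 98 + k)" using i by simp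
  have "V (6 * (n - i) + 98 + k) (183, m) = V (6 * (n - (i+1)) + 98 + k) (183, m')"
    unfolding e by (rule m'(1))
  also have "\<dots> = (if \<forall>j<n. ov j = real (w!j) then 1 else 0)"
    using Suc.hyps(1)[of "i+1" m'] Suc.hyps(2) m'(2) Suc.prems by simp
  finally show ?case .
qed

end


context setting begin

definition mn :: "nat \<Rightarrow> nat \<Rightarrow> real" where "mn i c = min (P i c) (Q i c)"
definition sm :: "nat \<Rightarrow> real" where "sm i = (\<Sum>c<q. mn i c)"
definition Tsuf :: "nat \<Rightarrow> real" where "Tsuf i = (\<Prod>k\<in>{i..<n}. sm k)"

definition base3 :: "(nat \<Rightarrow> real) \<Rightarrow> bool" where
  "base3 m \<longleftrightarrow> m 1 = 1 \<and> m 4 = real q \<and> m 6 = real n \<and> m 7 = real (n*q) \<and> m 9 = real (DPa n q)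
     \<and> m 10 = real (TBa n q) \<and> m 11 = real (OBa n q)"

definition inv3c :: "nat \<Rightarrow> real \<Rightarrow> nat \<Rightarrow> real \<Rightarrow> real \<Rightarrow> real \<Rightarrow> real \<Rightarrow> real \<Rightarrow> (nat \<Rightarrow> real)
    \<Rightarrow> (nat \<Rightarrow> real) \<Rightarrow> bool" where
  "inv3c i F c d vr g R \<gamma> hh m \<longleftrightarrow> base3 m \<and> m 12 = real i \<and> m 20 = F \<and> m 21 = \<gamma>
     \<and> m 27 = real (DPa n q + i*q) \<and> m 28 = real (TBa n q + i) \<and> m 29 = real (OBa n q + i)
     \<and> m 14 = real c \<and> m 15 = real (DPa n q + i*q + c) \<and> m 16 = real (DPa n q + i*q + n*q + c)
     \<and> m 23 = d \<and> m 13 = vr \<and> m 24 = g \<and> m 22 = R \<and> (\<forall>a\<ge>31. m a = hh a)"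

definition hdat :: "nat \<Rightarrow> (nat \<Rightarrow> real) \<Rightarrow> bool" where
  "hdat i hh \<longleftrightarrow> (\<forall>c<q. hh (DPa n q + i*q + c) = P i c \<and> hh (DPa n q + i*q + n*q + c) = Q i c)"

lemma DPa_ge: "DPa n q \<ge> 32"
proof -
  have "16*(n+1)*q \<ge> 16*2*1" using n1 q1 by (intro mult_mono) auto
  thus ?thesis unfolding DPa_def Bq_def by simp
qed

abbreviation "aw \<gamma> i c \<equiv> \<gamma> * mn i c"
abbreviation "bw i c \<equiv> P i c - mn i c"

definition p3post where
  "p3post i F c d vr g R \<gamma> hh x1 x2 x3 m11 m10 m01 m00 \<longleftrightarrow>
      x1 = (1 - d) * (aw \<gamma> i c / R) \<and> x2 = (1 - (d + 1)) * (bw i c / (R - aw \<gamma> i c))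
    \<and> x3 = (1 - d) * (bw i c / (R - aw \<gamma> i c))
    \<and> inv3c i F (c+1) (d+2) (vr + 2 * real c) (g+1) (R - aw \<gamma> i c - bw i c) \<gamma> hh m11
    \<and> inv3c i F (c+1) (d+1) (vr + real c) g (R - aw \<gamma> i c - bw i c) \<gamma> hh m10
    \<and> inv3c i F (c+1) (d+1) (vr + real c) (g+1) (R - aw \<gamma> i c - bw i c) \<gamma> hh m01
    \<and> inv3c i F (c+1) d vr g (R - aw \<gamma> i c - bw i c) \<gamma> hh m00"

lemma p3_body:
  assumes "inv3c i F c d vr g R \<gamma> hh m" "c < q" "hdat i hh"
  shows "\<exists>x1 x2 x3 m11 m10 m01 m00. V (29 + K) (142, m) =
      fl x1 (fl x2 (V K (142, m11)) (V K (142, m10))) (fl x3 (V K (142, m01)) (V K (142, m00)))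
      \<and> p3post i F c d vr g R \<gamma> hh x1 x2 x3 m11 m10 m01 m00"
proof -
  have dp: "DPa n q \<ge> 32" by (rule DPa_ge)
  show ?thesis
  proof (cases "P i c \<le> Q i c")
    case True
    show ?thesis
      using assms True dp unfolding inv3c_def base3_def hdat_def
      apply (subst VV_mem)
      apply (simp add: run del: of_nat_add of_nat_mult of_nat_Suc)
      apply (intro exI conjI)
       apply (rule refl)
      apply (simp add: p3post_def inv3c_def base3_def mem_app mn_def)
      done
  next
    case False
    show ?thesis
      using assms False dp unfolding inv3c_def base3_def hdat_def
      apply (subst VV_mem)
      apply (simp add: run del: of_nat_add of_nat_mult of_nat_Suc)
      apply (intro exI conjI)
       apply (rule refl)
      apply (simp add: p3post_def inv3c_def base3_def mem_app mn_def)
      done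
  qed
qed

lemma fl_simp: "0 \<le> x \<Longrightarrow> x \<le> 1 \<Longrightarrow> fl x A B = x * A + (1 - x) * B"
  by (simp add: fl_def)
lemma fl_0: "fl 0 A B = B" by (simp add: fl_def)

lemma alg_step:
  fixes a b R R' S X10 X01 X00 H0 H1 :: real
  assumes "0 \<le> a" "0 \<le> b" "0 \<le> R'" "R = a + b + R'" "0 < R"
    "a * X10 = a * H0" "X01 = H1" "R' > 0 \<Longrightarrow> X00 = S / R'" "R' = 0 \<Longrightarrow> S = 0"
  shows "fl (a / R) X10 (fl (b / (R - a)) X01 X00) = (a * H0 + b * H1 + S) / R"
proof (cases "R - a = 0")
  case True
  hence "b = 0" "R' = 0" using assms by auto
  hence "S = 0" using assms by auto
  have Ra: "R = a" using True by simp
  hence "a > 0" using assms by simp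
  have "fl (a / R) X10 (fl (b / (R - a)) X01 X00) = X10" using Ra \<open>a > 0\<close> by (simp add: fl_def)
  also have "X10 = H0" using assms(6) \<open>a > 0\<close> by simp
  also have "H0 = (a * H0 + b * H1 + S) / R" using Ra \<open>a > 0\<close> \<open>b = 0\<close> \<open>S = 0\<close> by simp
  finally show ?thesis .
next
  case False
  hence Ra: "R - a > 0" using assms by auto
  have x1: "0 \<le> a / R" "a / R \<le> 1" using assms by auto
  have x3: "0 \<le> b / (R - a)" "b / (R - a) \<le> 1" using assms Ra by auto
  have e1: "a / R * X10 = a * H0 / R" using assms(6) by (metis times_divide_eq_left mult.commute)
  show ?thesis
  proof (cases "R' = 0")
    case True
    hence S0: "S = 0" and b: "b = R - a" using assms by auto
    have "fl (b / (R - a)) X01 X00 = H1" using b Ra assms(7) by (simp add: fl_def)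
    hence "fl (a / R) X10 (fl (b / (R - a)) X01 X00) = a / R * X10 + (1 - a / R) * H1"
      using x1 by (simp add: fl_simp)
    also have "1 - a / R = b / R" using b assms(5) by (simp add: field_simps)
    also have "a / R * X10 + b / R * H1 = (a * H0 + b * H1 + S) / R"
      by (simp only: e1 S0) (simp add: add_divide_distrib)
    finally show ?thesis .
  next
    case False
    hence R': "R' > 0" using assms by auto
    have "fl (a / R) X10 (fl (b / (R - a)) X01 X00) = a / R * X10 + (1 - a/R) * (b / (R - a) * H1 + (1 - b/(R-a)) * (S / R'))"
      using x1 x3 assms R' by (simp add: fl_simp)
    also have "1 - a / R = (R - a) / R" using assms(5) by (simp add: field_simps)
    also have "1 - b / (R - a) = R' / (R - a)" using Ra assms(4) by (simp add: field_simps)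
    also have "R' / (R - a) * (S / R') = S / (R - a)" using R' by simp
    also have "b / (R - a) * H1 + S / (R - a) = (b * H1 + S) / (R - a)" by (simp add: add_divide_distrib)
    also have "(R - a) / R * ((b * H1 + S) / (R - a)) = (b * H1 + S) / R" using Ra by simp
    also have "a / R * X10 + (b * H1 + S) / R = (a * H0 + b * H1 + S) / R"
      by (simp only: e1) (simp add: add_divide_distrib)
    finally show ?thesis .
  qed
qed

lemma P_nonneg: "i < n \<Longrightarrow> c < q \<Longrightarrow> 0 \<le> P i c"
  using dP unfolding is_product_dist_def is_dist_def by auto
lemma Q_nonneg: "i < n \<Longrightarrow> c < q \<Longrightarrow> 0 \<le> Q i c"
  using dQ unfolding is_product_dist_def is_dist_def by auto
lemma mn_nonneg: "i < n \<Longrightarrow> c < q \<Longrightarrow> 0 \<le> mn i c"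
  using P_nonneg Q_nonneg unfolding mn_def by auto
lemma bw_nonneg: "0 \<le> bw i c" unfolding mn_def by auto

lemma sum_zero_weights:
  fixes a b :: "nat \<Rightarrow> real"
  assumes "finite A" "\<forall>x\<in>A. 0 \<le> a x \<and> 0 \<le> b x" "(\<Sum>x\<in>A. a x + b x) = 0"
  shows "(\<Sum>x\<in>A. a x * f x + b x * g x) = 0"
proof -
  have "\<forall>x\<in>A. a x + b x = 0" using assms by (subst sum_nonneg_eq_0_iff[symmetric]) auto
  hence "\<forall>x\<in>A. a x = 0 \<and> b x = 0" using assms by force
  thus ?thesis by simp
qed

lemma p3_inner:
  assumes hd: "hdat i hh" and i: "i < n" and gam: "0 \<le> \<gamma>"
    and Hc0: "\<forall>v g R' m' K. v < q \<longrightarrow> (g = 1 \<or> (g = 0 \<and> \<gamma> > 0)) \<longrightarrow> inv3c i F q 1 (real v) g R' \<gamma> hh m'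
              \<longrightarrow> V (tA + K) (173, m') = H v g"
  shows "c \<le> q \<Longrightarrow> inv3c i F c d vr g R \<gamma> hh m \<Longrightarrow>
   (d = 0 \<and> vr = 0 \<and> g = 0 \<and> R = (\<Sum>c'\<in>{c..<q}. aw \<gamma> i c' + bw i c') \<and> R > 0 \<longrightarrow>
       V (29*(q-c) + 1 + tA + K) (142, m) = (\<Sum>c'\<in>{c..<q}. aw \<gamma> i c' * H c' 0 + bw i c' * H c' 1) / R)
   \<and> (\<forall>v. d = 1 \<and> vr = real v \<and> v < q \<and> (g = 1 \<or> (g = 0 \<and> \<gamma> > 0)) \<longrightarrow>
       V (29*(q-c) + 1 + tA + K) (142, m) = H v g)"
proof (induction "q - c" arbitrary: c d vr g R m)
  have Hc: "\<And>v g R' m' K. v < q \<Longrightarrow> (g = 1 \<or> (g = 0 \<and> \<gamma> > 0)) \<Longrightarrow> inv3c i F q 1 (real v) g R' \<gamma> hh m'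
              \<Longrightarrow> V (tA + K) (173, m') = H v g" using Hc0 by blast
  case 0
  hence c: "c = q" by simp
  have "V (29*(q-c) + 1 + tA + K) (142, m) = V (tA + K) (173, m)"
    using 0 c unfolding inv3c_def base3_def
    by (simp add: VV_step length_prog prog_nth)
  thus ?case using Hc[of _ g R m K] 0 c by auto
next
  case (Suc x)
  hence c: "c < q" by simp
  define K' where "K' = 29*(q - Suc c) + 1 + tA + K"
  have tt: "29*(q-c) + 1 + tA + K = 29 + K'" unfolding K'_def using c by simp
  obtain x1 x2 x3 m11 m10 m01 m00 where
    b: "V (29 + K') (142, m) = fl x1 (fl x2 (V K' (142, m11)) (V K' (142, m10))) (fl x3 (V K' (142, m01)) (V K' (142, m00)))"
    and pp: "p3post i F c d vr g R \<gamma> hh x1 x2 x3 m11 m10 m01 m00"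
    using p3_body[OF Suc.prems(2) c hd, of K'] by blast
  have IH: "\<And>d vr g R m. inv3c i F (Suc c) d vr g R \<gamma> hh m \<Longrightarrow>
   (d = 0 \<and> vr = 0 \<and> g = 0 \<and> R = (\<Sum>c'\<in>{Suc c..<q}. aw \<gamma> i c' + bw i c') \<and> R > 0 \<longrightarrow>
       V K' (142, m) = (\<Sum>c'\<in>{Suc c..<q}. aw \<gamma> i c' * H c' 0 + bw i c' * H c' 1) / R)
   \<and> (\<forall>v. d = 1 \<and> vr = real v \<and> v < q \<and> (g = 1 \<or> (g = 0 \<and> \<gamma> > 0)) \<longrightarrow> V K' (142, m) = H v g)"
    using Suc.hyps(1)[of "Suc c"] Suc.hyps(2) c unfolding K'_def by simp
  show ?case
  proof (intro conjI allI impI)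
    assume A: "d = 0 \<and> vr = 0 \<and> g = 0 \<and> R = (\<Sum>c'\<in>{c..<q}. aw \<gamma> i c' + bw i c') \<and> R > 0"
    define a where "a = aw \<gamma> i c"
    define bb where "bb = bw i c"
    define R' where "R' = (\<Sum>c'\<in>{Suc c..<q}. aw \<gamma> i c' + bw i c')"
    define S where "S = (\<Sum>c'\<in>{Suc c..<q}. aw \<gamma> i c' * H c' 0 + bw i c' * H c' 1)"
    have split1: "(\<Sum>c'\<in>{c..<q}. aw \<gamma> i c' + bw i c') = a + bb + R'"
      unfolding a_def bb_def R'_def using c by (simp add: sum.atLeast_Suc_lessThan)
    have split2: "(\<Sum>c'\<in>{c..<q}. aw \<gamma> i c' * H c' 0 + bw i c' * H c' 1) = a * H c 0 + bb * H c 1 + S"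
      unfolding a_def bb_def S_def using c by (simp add: sum.atLeast_Suc_lessThan)
    have nn: "\<forall>c'\<in>{Suc c..<q}. 0 \<le> aw \<gamma> i c' \<and> 0 \<le> bw i c'"
      using gam i mn_nonneg bw_nonneg by auto
    have a0: "0 \<le> a" unfolding a_def using gam i c mn_nonneg by auto
    have b0: "0 \<le> bb" unfolding bb_def by (rule bw_nonneg)
    have R'0: "0 \<le> R'" unfolding R'_def using nn by (intro sum_nonneg) auto
    have RR: "R = a + bb + R'" using A split1 by simp
    have mm: "R - aw \<gamma> i c - bw i c = R'" using RR a_def bb_def by simp
    have x1: "x1 = a / R" using pp A unfolding p3post_def a_def by simp
    have x2: "x2 = 0" using pp A unfolding p3post_def by simp
    have x3: "x3 = bb / (R - a)" using pp A unfolding p3post_def a_def bb_def by simp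
    have X10: "a * V K' (142, m10) = a * H c 0"
    proof (cases "\<gamma> > 0")
      case True
      have "inv3c i F (Suc c) (0+1) (0 + real c) 0 (R - aw \<gamma> i c - bw i c) \<gamma> hh m10"
        using pp A unfolding p3post_def by simp
      hence "V K' (142, m10) = H c 0" using IH[of "0+1" "0 + real c" 0 _ m10] c True by simp
      thus ?thesis by simp
    next
      case False
      hence "\<gamma> = 0" using gam by simp
      thus ?thesis unfolding a_def by simp
    qed
    have X01: "V K' (142, m01) = H c 1"
    proof -
      have "inv3c i F (Suc c) (0+1) (0 + real c) (0+1) (R - aw \<gamma> i c - bw i c) \<gamma> hh m01"
        using pp A unfolding p3post_def by simp
      thus ?thesis using IH[of "0+1" "0 + real c" "0+1" _ m01] c by simp
    qed
    have X00: "R' > 0 \<Longrightarrow> V K' (142, m00) = S / R'"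
    proof -
      assume "R' > 0"
      have "inv3c i F (Suc c) 0 0 0 R' \<gamma> hh m00"
        using pp A mm unfolding p3post_def by simp
      thus ?thesis using IH[of 0 0 0 R' m00] \<open>R' > 0\<close> unfolding R'_def S_def by simp
    qed
    have S0: "R' = 0 \<Longrightarrow> S = 0"
      unfolding S_def R'_def by (rule sum_zero_weights) (use nn in auto)
    have "V (29*(q-c) + 1 + tA + K) (142, m) = fl (a / R) (V K' (142, m10)) (fl (bb / (R - a)) (V K' (142, m01)) (V K' (142, m00)))"
      unfolding tt b x1 x2 x3 fl_0 ..
    also have "\<dots> = (a * H c 0 + bb * H c 1 + S) / R"
      by (rule alg_step[OF a0 b0 R'0 RR]) (use A X10 X01 X00 S0 in auto)
    finally show "V (29*(q-c) + 1 + tA + K) (142, m) = (\<Sum>c'\<in>{c..<q}. aw \<gamma> i c' * H c' 0 + bw i c' * H c' 1) / R"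
      using split2 by simp
  next
    fix v assume A: "d = 1 \<and> vr = real v \<and> v < q \<and> (g = 1 \<or> (g = 0 \<and> \<gamma> > 0))"
    have x1: "x1 = 0" "x3 = 0" using pp A unfolding p3post_def by auto
    have "inv3c i F (Suc c) 1 (real v) g (R - aw \<gamma> i c - bw i c) \<gamma> hh m00"
      using pp A unfolding p3post_def by simp
    hence "V K' (142, m00) = H v g" using IH[of 1 "real v" g _ m00] A by auto
    thus "V (29*(q-c) + 1 + tA + K) (142, m) = H v g"
      unfolding tt b x1 fl_0 .
  qed
qed

end


context setting begin

definition hiok :: "(nat \<Rightarrow> real) \<Rightarrow> bool" where
  "hiok m \<longleftrightarrow> (\<forall>i<n. hdat i m) \<and> (\<forall>j\<le>n. m (TBa n q + j) = Tsuf j)"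

definition inv3 :: "nat \<Rightarrow> real \<Rightarrow> (nat \<Rightarrow> real) \<Rightarrow> bool" where
  "inv3 i F m \<longleftrightarrow> base3 m \<and> m 12 = real i \<and> m 20 = F \<and> m 27 = real (DPa n q + i*q)
     \<and> m 28 = real (TBa n q + i) \<and> m 29 = real (OBa n q + i) \<and> hiok m"

lemma TBa_ge: "TBa n q \<ge> 32" using DPa_ge unfolding DPa_def TBa_def by simp
lemma OBa_ge: "OBa n q \<ge> 32" using TBa_ge unfolding OBa_def by simp
lemma OBa_gt: "OBa n q > n" unfolding OBa_def by simp

lemma p3_pre:
  assumes "inv3 i F m" "i < n"
  shows "\<exists>m'. V (14 + K) (128, m) = V K (142, m') \<and> inv3c i F 0 0 0 0 (1 - F * Tsuf i) (1 - F * Tsuf (i+1)) m m'"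
proof -
  have t: "TBa n q \<ge> 32" by (rule TBa_ge)
  have hT: "\<forall>j\<le>n. m (TBa n q + j) = Tsuf j" using assms unfolding inv3_def hiok_def by auto
  have T: "m (TBa n q + i) = Tsuf i" "m (TBa n q + i + 1) = Tsuf (i + 1)"
    using hT[rule_format, of i] hT[rule_format, of "i+1"] assms(2) by auto
  show ?thesis
    using assms t T unfolding inv3_def base3_def
    apply (subst VV_mem)
    apply (simp add: run del: of_nat_add of_nat_mult of_nat_Suc)
    apply (intro exI conjI)
     apply (rule refl)
    apply (simp add: inv3c_def base3_def mem_app)
    done
qed

lemma p3_post:
  assumes "inv3c i F q 1 (real v) g R' \<gamma> hh m'"
  shows "\<exists>m''. V (8 + K) (173, m') = V K (128, m'') \<and> base3 m'' \<and> m'' 12 = real (i+1) \<and> m'' 20 = F - F * g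
     \<and> m'' 27 = real (DPa n q + (i+1)*q) \<and> m'' 28 = real (TBa n q + (i+1)) \<and> m'' 29 = real (OBa n q + (i+1))
     \<and> (\<forall>a\<ge>31. m'' a = (hh(OBa n q + i := real v)) a)"
proof -
  have t: "OBa n q \<ge> 32" by (rule OBa_ge)
  show ?thesis
    using assms t unfolding inv3c_def base3_def
    apply (subst VV_mem)
    apply (simp add: run del: of_nat_add of_nat_mult of_nat_Suc)
    apply (intro exI conjI)
     apply (rule refl)
    apply (simp_all add: mem_app algebra_simps)
    done
qed

lemma p3_exit:
  assumes "inv3 n F m"
  shows "\<exists>m'. V (3 + K) (128, m) = V K (183, m') \<and> inv4 (OBa n q) 31 (\<lambda>j. m (OBa n q + j)) m'"
proof -
  have t: "OBa n q \<ge> 32" by (rule OBa_ge)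
  show ?thesis
    using assms t unfolding inv3_def base3_def
    apply (subst VV_mem)
    apply (simp add: run del: of_nat_add of_nat_mult of_nat_Suc)
    apply (intro exI conjI)
     apply (rule refl)
    apply (simp add: inv4_def mem_app)
    done
qed

lemma iq_lt: "i' < n \<Longrightarrow> c < q \<Longrightarrow> i' * q + c < n * q"
proof -
  assume a: "i' < n" "c < q"
  have "i' * q + c < i' * q + q" using a by simp
  also have "\<dots> = Suc i' * q" by simp
  also have "\<dots> \<le> n * q" using a by (intro mult_right_mono) auto
  finally show ?thesis .
qed

lemma addr_lt:
  assumes "i' < n" "c < q"
  shows "DPa n q + i' * q + c < TBa n q" "DPa n q + i' * q + n * q + c < TBa n q"
  using iq_lt[OF assms] unfolding DPa_def TBa_def by (auto simp: algebra_simps)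

lemma hiok_upd:
  assumes "hiok h" "\<forall>a\<ge>31. h' a = (h(OBa n q + i := x)) a"
  shows "hiok h'"
  unfolding hiok_def hdat_def
proof (intro conjI allI impI)
  fix i' c assume a: "i' < n" "c < q"
  have d: "DPa n q \<ge> 32" by (rule DPa_ge)
  have l: "DPa n q + i' * q + c < OBa n q" "DPa n q + i' * q + n * q + c < OBa n q"
    using addr_lt[OF a] unfolding OBa_def by auto
  show "h' (DPa n q + i' * q + c) = P i' c" "h' (DPa n q + i' * q + n * q + c) = Q i' c"
    using assms a d l unfolding hiok_def hdat_def by auto
next
  fix j assume j: "j \<le> n"
  have t: "TBa n q \<ge> 32" by (rule TBa_ge)
  have "TBa n q + j < OBa n q" using j unfolding OBa_def by simp
  thus "h' (TBa n q + j) = Tsuf j" using assms j t unfolding hiok_def by auto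
qed

lemma Tsuf_n: "Tsuf n = 1" unfolding Tsuf_def by simp
lemma Tsuf_step: "i < n \<Longrightarrow> Tsuf i = sm i * Tsuf (Suc i)"
  unfolding Tsuf_def by (simp add: prod.atLeast_Suc_lessThan)
lemma sm_bounds: "i < n \<Longrightarrow> 0 \<le> sm i \<and> sm i \<le> 1"
  using sum_min_le1(1)[of q "P i" "Q i"] sum_min_nonneg[of q "P i" "Q i"] dP dQ
  unfolding sm_def mn_def is_product_dist_def by auto
lemma Tsuf_bounds: "0 \<le> Tsuf i \<and> Tsuf i \<le> 1"
  unfolding Tsuf_def using sm_bounds by (auto intro: prod_nonneg prod_le_1)
lemma Tsuf_one:
  assumes "Tsuf i = 1" "i \<le> k" "k < n" "c < q"
  shows "mn k c = P k c"
proof -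
  have "sm k = 1"
    by (rule prod_eq1_each[of "{i..<n}" sm]) (use assms sm_bounds in \<open>auto simp: Tsuf_def\<close>)
  thus ?thesis using sum_min_eq1(1)[of q "P k" "Q k" c] dP dQ assms
    unfolding sm_def mn_def is_product_dist_def by auto
qed

definition PP :: "nat \<Rightarrow> real" where "PP i = (\<Prod>k\<in>{i..<n}. P k (w!k))"
definition MM :: "nat \<Rightarrow> real" where "MM i = (\<Prod>k\<in>{i..<n}. mn k (w!k))"

lemma wq: "k < n \<Longrightarrow> w!k < q" using wc unfolding cube_def by auto

lemma MM_PP: "Tsuf i = 1 \<Longrightarrow> MM i = PP i"
  unfolding MM_def PP_def by (rule prod.cong) (auto intro: Tsuf_one wq)

definition Phi3 :: "nat \<Rightarrow> real \<Rightarrow> (nat \<Rightarrow> real) \<Rightarrow> real" where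
  "Phi3 i F ov = (if \<forall>j<i. ov j = real (w!j) then 1 else 0) * ((PP i - F * MM i) / (1 - F * Tsuf i))"

lemma Phi3_cong: "(\<forall>j<i. ov j = ov' j) \<Longrightarrow> Phi3 i F ov = Phi3 i F ov'"
  unfolding Phi3_def by simp

lemma PP_step: "i < n \<Longrightarrow> PP i = P i (w!i) * PP (Suc i)"
  unfolding PP_def by (simp add: prod.atLeast_Suc_lessThan)
lemma MM_step: "i < n \<Longrightarrow> MM i = mn i (w!i) * MM (Suc i)"
  unfolding MM_def by (simp add: prod.atLeast_Suc_lessThan)

lemma p3_alg:
  assumes i: "i < n" and F: "F = 0 \<or> F = 1" and R: "1 - F * Tsuf i > 0"
  shows "(\<Sum>c\<in>{0..<q}. aw (1 - F * Tsuf (Suc i)) i c * Phi3 (Suc i) (F - F * 0) (\<lambda>j. if j = i then real c else ov j)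
        + bw i c * Phi3 (Suc i) (F - F * 1) (\<lambda>j. if j = i then real c else ov j)) / (1 - F * Tsuf i)
      = Phi3 i F ov"
proof -
  define \<gamma> where "\<gamma> = 1 - F * Tsuf (Suc i)"
  define pre :: real where "pre = (if \<forall>j<i. ov j = real (w!j) then 1 else 0)"
  define wi where "wi = w!i"
  have wi: "wi < q" unfolding wi_def using wq i by simp
  define Y0 where "Y0 = (PP (Suc i) - F * MM (Suc i)) / \<gamma>"
  have ind: "(if \<forall>j<Suc i. (if j = i then real c else ov j) = real (w!j) then 1 else 0) =
        (if c = wi then pre else (0::real))" for c
  proof -
    have "(\<forall>j<Suc i. (if j = i then real c else ov j) = real (w!j)) \<longleftrightarrow> (c = wi \<and> (\<forall>j<i. ov j = real (w!j)))"
      unfolding wi_def by (auto simp: less_Suc_eq)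
    thus ?thesis unfolding pre_def by auto
  qed
  have tm: "aw \<gamma> i c * Phi3 (Suc i) (F - F * 0) (\<lambda>j. if j = i then real c else ov j)
        + bw i c * Phi3 (Suc i) (F - F * 1) (\<lambda>j. if j = i then real c else ov j)
      = (if c = wi then pre * (aw \<gamma> i wi * Y0 + bw i wi * PP (Suc i)) else 0)" for c
    unfolding Phi3_def ind Y0_def \<gamma>_def by (auto simp: algebra_simps)
  have "(\<Sum>c\<in>{0..<q}. aw \<gamma> i c * Phi3 (Suc i) (F - F * 0) (\<lambda>j. if j = i then real c else ov j)
        + bw i c * Phi3 (Suc i) (F - F * 1) (\<lambda>j. if j = i then real c else ov j))
      = pre * (aw \<gamma> i wi * Y0 + bw i wi * PP (Suc i))"
    unfolding tm using wi by (simp add: sum.delta')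
  also have "aw \<gamma> i wi * Y0 = mn i wi * (PP (Suc i) - F * MM (Suc i))"
  proof (cases "\<gamma> = 0")
    case True
    hence "F = 1" "Tsuf (Suc i) = 1" using F unfolding \<gamma>_def by auto
    hence "MM (Suc i) = PP (Suc i)" by (simp add: MM_PP)
    thus ?thesis using True \<open>F = 1\<close> by simp
  next
    case False
    thus ?thesis unfolding Y0_def by simp
  qed
  also have "mn i wi * (PP (Suc i) - F * MM (Suc i)) + bw i wi * PP (Suc i) = PP i - F * MM i"
    using PP_step[OF i] MM_step[OF i] unfolding wi_def by (simp add: algebra_simps)
  finally show ?thesis unfolding Phi3_def pre_def \<gamma>_def by simp
qed

definition t3 :: "nat \<Rightarrow> nat" where "t3 i = (n - i) * (29 * q + 23) + 6 * (n - 31) + 101"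

lemma sum_weights:
  assumes i: "i < n"
  shows "(\<Sum>c\<in>{0..<q}. aw (1 - F * Tsuf (Suc i)) i c + bw i c) = 1 - F * Tsuf i"
proof -
  have "(\<Sum>c\<in>{0..<q}. aw (1 - F * Tsuf (Suc i)) i c + bw i c)
      = (1 - F * Tsuf (Suc i)) * sm i + ((\<Sum>c<q. P i c) - sm i)"
    unfolding sm_def by (simp add: sum.distrib sum_distrib_left sum_subtractf atLeast0LessThan)
  also have "(\<Sum>c<q. P i c) = 1" using dP i unfolding is_product_dist_def is_dist_def by auto
  finally show ?thesis using Tsuf_step[OF i] by (simp add: algebra_simps)
qed

lemma p3_outer:
  "i \<le> n \<Longrightarrow> (F = 0 \<or> F = 1) \<Longrightarrow> 1 - F * Tsuf i > 0 \<Longrightarrow> inv3 i F m \<Longrightarrow>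
   V (t3 i + k) (128, m) = Phi3 i F (\<lambda>j. m (OBa n q + j))"
proof (induction "n - i" arbitrary: i F m k)
  case 0
  hence i: "i = n" by simp
  have F0: "F = 0" using 0 i Tsuf_n by auto
  obtain m' where m': "V (3 + (6 * (n - 31) + 98 + k)) (128, m) = V (6 * (n - 31) + 98 + k) (183, m')"
    "inv4 (OBa n q) 31 (\<lambda>j. m (OBa n q + j)) m'"
    using p3_exit[of F m] 0 i by blast
  have "V (t3 i + k) (128, m) = V (3 + (6 * (n - 31) + 98 + k)) (128, m)"
    by (rule arg_cong[where f="\<lambda>t. V t (128, m)"]) (simp add: t3_def i)
  also have "\<dots> = (if \<forall>j<n. m (OBa n q + j) = real (w!j) then 1 else 0)"
    unfolding m'(1) by (rule p4_loop[OF m'(2)]) (use OBa_ge OBa_gt in auto)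
  also have "\<dots> = Phi3 i F (\<lambda>j. m (OBa n q + j))"
    unfolding Phi3_def i F0 PP_def MM_def by simp
  finally show ?case .
next
  case (Suc x)
  hence i: "i < n" by simp
  define \<gamma> where "\<gamma> = 1 - F * Tsuf (Suc i)"
  define R where "R = 1 - F * Tsuf i"
  define tA where "tA = 8 + t3 (Suc i)"
  define H where "H = (\<lambda>v g. Phi3 (Suc i) (F - F * g) (\<lambda>j. if j = i then real v else m (OBa n q + j)))"
  have hiok: "hiok m" using Suc.prems unfolding inv3_def by simp
  have hd: "hdat i m" using hiok i unfolding hiok_def by simp
  have gam: "0 \<le> \<gamma>" unfolding \<gamma>_def using Suc.prems(2) Tsuf_bounds[of "Suc i"] by auto
  obtain m1 where m1: "V (14 + (29 * (q - 0) + 1 + tA + k)) (128, m) = V (29 * (q - 0) + 1 + tA + k) (142, m1)"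
    "inv3c i F 0 0 0 0 R \<gamma> m m1"
    using p3_pre[OF Suc.prems(4) i, of "29 * (q - 0) + 1 + tA + k"] unfolding R_def \<gamma>_def Suc_eq_plus1 by blast
  have Hc: "\<forall>v g R' m' K. v < q \<longrightarrow> (g = 1 \<or> (g = 0 \<and> \<gamma> > 0)) \<longrightarrow> inv3c i F q 1 (real v) g R' \<gamma> m m'
              \<longrightarrow> V (tA + K) (173, m') = H v g"
  proof (intro allI impI)
    fix v g R' m' K assume v: "v < q" and g: "g = 1 \<or> (g = 0 \<and> \<gamma> > 0)" and m': "inv3c i F q 1 (real v) g R' \<gamma> m m'"
    obtain m'' where m'': "V (8 + (t3 (Suc i) + K)) (173, m') = V (t3 (Suc i) + K) (128, m'')"
      "base3 m''" "m'' 12 = real (i+1)" "m'' 20 = F - F * g"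
      "m'' 27 = real (DPa n q + (i+1)*q)" "m'' 28 = real (TBa n q + (i+1))" "m'' 29 = real (OBa n q + (i+1))"
      "\<forall>a\<ge>31. m'' a = (m(OBa n q + i := real v)) a"
      using p3_post[OF m'] by blast
    have inv: "inv3 (Suc i) (F - F * g) m''"
      unfolding inv3_def using m'' hiok_upd[OF hiok m''(8)] by simp
    have F': "F - F * g = 0 \<or> F - F * g = 1" using g Suc.prems(2) by auto
    have G': "1 - (F - F * g) * Tsuf (Suc i) > 0" using g unfolding \<gamma>_def by auto
    have "V (tA + K) (173, m') = V (t3 (Suc i) + K) (128, m'')" unfolding tA_def using m''(1) by (simp add: add.assoc)
    also have "\<dots> = Phi3 (Suc i) (F - F * g) (\<lambda>j. m'' (OBa n q + j))"
      using Suc.hyps(1)[of "Suc i" "F - F*g" m'' K] Suc.hyps(2) i F' G' inv by simp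
    also have "\<dots> = H v g" unfolding H_def
    proof (rule Phi3_cong, intro allI impI)
      fix j assume "j < Suc i"
      have "OBa n q \<ge> 32" by (rule OBa_ge)
      thus "m'' (OBa n q + j) = (if j = i then real v else m (OBa n q + j))" using m''(8) by auto
    qed
    finally show "V (tA + K) (173, m') = H v g" .
  qed
  note inner = p3_inner[where H=H and tA=tA and F=F and \<gamma>=\<gamma> and hh=m and i=i, OF hd i gam Hc,
     where c=0 and d=0 and vr=0 and g=0 and R=R and m=m1 and K=k]
  have e: "n - i = Suc (n - Suc i)" using i by simp
  have "V (t3 i + k) (128, m) = V (14 + (29 * (q - 0) + 1 + tA + k)) (128, m)"
    by (rule arg_cong[where f="\<lambda>t. V t (128, m)"]) (simp add: t3_def tA_def e)
  also have "\<dots> = (\<Sum>c'\<in>{0..<q}. aw \<gamma> i c' * H c' 0 + bw i c' * H c' 1) / R"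
  proof -
    have w: "R = (\<Sum>c'\<in>{0..<q}. aw \<gamma> i c' + bw i c')" unfolding R_def \<gamma>_def using sum_weights[OF i, of F] by simp
    have "R > 0" unfolding R_def using Suc.prems(3) .
    hence "V (29 * (q - 0) + 1 + tA + k) (142, m1) = (\<Sum>c'\<in>{0..<q}. aw \<gamma> i c' * H c' 0 + bw i c' * H c' 1) / R"
      using conjunct1[OF inner[OF _ m1(2)]] w by simp
    thus ?thesis unfolding m1(1) .
  qed
  also have "\<dots> = Phi3 i F (\<lambda>j. m (OBa n q + j))"
    unfolding H_def \<gamma>_def R_def using p3_alg[OF i Suc.prems(2,3)] by simp
  finally show ?case .
qed

end


lemma rn7: "real (a + b) - real b = real a" by simp

context setting begin

definition inv2c :: "nat \<Rightarrow> nat \<Rightarrow> real \<Rightarrow> (nat \<Rightarrow> real) \<Rightarrow> (nat \<Rightarrow> real) \<Rightarrow> bool" where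
  "inv2c j c S hh m \<longleftrightarrow> base3 m \<and> m 12 = real (Suc j) \<and> m 27 = real (DPa n q + j*q) \<and> m 28 = real (TBa n q + j)
     \<and> m 13 = S \<and> m 14 = real c \<and> m 15 = real (DPa n q + j*q + c) \<and> m 16 = real (DPa n q + j*q + n*q + c)
     \<and> (\<forall>a\<ge>31. m a = hh a)"

lemma p2_body:
  assumes "inv2c j c S hh m" "c < q" "hdat j hh"
  shows "\<exists>m'. V (11 + K) (104, m) = V K (104, m') \<and> inv2c j (c+1) (S + mn j c) hh m'"
proof -
  have dp: "DPa n q \<ge> 32" by (rule DPa_ge)
  show ?thesis
  proof (cases "P j c \<le> Q j c")
    case True
    show ?thesis
      using assms True dp unfolding inv2c_def base3_def hdat_def
      apply (subst VV_mem)
      apply (simp add: run del: of_nat_add of_nat_mult of_nat_Suc)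
      apply (intro exI conjI)
       apply (rule refl)
      apply (simp_all add: mem_app mn_def)
      done
  next
    case False
    show ?thesis
      using assms False dp unfolding inv2c_def base3_def hdat_def
      apply (subst VV_mem)
      apply (simp add: run del: of_nat_add of_nat_mult of_nat_Suc)
      apply (intro exI conjI)
       apply (rule refl)
      apply (simp_all add: mem_app mn_def)
      done
  qed
qed

lemma p2_inner:
  assumes "hdat j hh"
  shows "c \<le> q \<Longrightarrow> inv2c j c S hh m \<Longrightarrow>
    \<exists>m'. V (11 * (q - c) + 1 + K) (104, m) = V K (117, m') \<and> inv2c j q (S + (\<Sum>c'\<in>{c..<q}. mn j c')) hh m'"
proof (induction "q - c" arbitrary: c S m)
  case 0
  hence c: "c = q" by simp
  have "V (11 * (q - c) + 1 + K) (104, m) = V K (117, m)"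
    using 0 c unfolding inv2c_def base3_def by (simp add: VV_step length_prog prog_nth)
  thus ?case using 0 c by auto
next
  case (Suc x)
  hence c: "c < q" by simp
  obtain m1 where m1: "V (11 + (11 * (q - Suc c) + 1 + K)) (104, m) = V (11 * (q - Suc c) + 1 + K) (104, m1)"
    "inv2c j (c+1) (S + mn j c) hh m1"
    using p2_body[OF Suc.prems(2) c assms] by blast
  obtain m' where m': "V (11 * (q - Suc c) + 1 + K) (104, m1) = V K (117, m')"
      "inv2c j q (S + mn j c + (\<Sum>c'\<in>{Suc c..<q}. mn j c')) hh m'"
  proof -
    have x: "x = q - Suc c" using Suc.hyps(2) by simp
    have "Suc c \<le> q" using c by simp
    from Suc.hyps(1)[OF x this] m1(2) show ?thesis using that by auto
  qed
  have e: "11 * (q - c) + 1 + K = 11 + (11 * (q - Suc c) + 1 + K)" using c by simp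
  have s: "S + mn j c + (\<Sum>c'\<in>{Suc c..<q}. mn j c') = S + (\<Sum>c'\<in>{c..<q}. mn j c')"
    using c by (simp add: sum.atLeast_Suc_lessThan)
  have "V (11 * (q - c) + 1 + K) (104, m) = V K (117, m')" unfolding e m1(1) m'(1) ..
  thus ?case using m'(2) unfolding s by blast
qed

definition inv2 :: "nat \<Rightarrow> (nat \<Rightarrow> real) \<Rightarrow> bool" where
  "inv2 j m \<longleftrightarrow> base3 m \<and> m 12 = real j \<and> m 27 = real (DPa n q + j*q) \<and> m 28 = real (TBa n q + j)
     \<and> (\<forall>i<n. hdat i m) \<and> (\<forall>j'. j \<le> j' \<longrightarrow> j' \<le> n \<longrightarrow> m (TBa n q + j') = Tsuf j')"

lemma p2_pre:
  assumes "base3 m" "m 12 = real (Suc j)" "m 27 = real (DPa n q + j*q + q)" "m 28 = real (TBa n q + Suc j)"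
  shows "\<exists>m'. V (7 + K) (96, m) = V K (104, m') \<and> inv2c j 0 0 m m'"
  using assms unfolding base3_def
  apply (subst VV_mem)
  apply (simp add: run rn7 del: of_nat_add of_nat_mult of_nat_Suc)
  apply (intro exI conjI)
   apply (rule refl)
  apply (simp add: inv2c_def base3_def mem_app)
  done

lemma p2_post:
  assumes "inv2c j q S hh m" "hh (TBa n q + Suc j) = T"
  shows "\<exists>m'. V (6 + K) (117, m) = V K (96, m') \<and> base3 m' \<and> m' 12 = real j \<and> m' 27 = real (DPa n q + j*q)
     \<and> m' 28 = real (TBa n q + j) \<and> (\<forall>a\<ge>31. m' a = (hh(TBa n q + j := T * S)) a)"
proof -
  have t: "TBa n q \<ge> 32" by (rule TBa_ge)
  show ?thesis
    using assms t unfolding inv2c_def base3_def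
    apply (subst VV_mem)
    apply (simp add: run del: of_nat_add of_nat_mult of_nat_Suc)
    apply (intro exI conjI)
     apply (rule refl)
    apply (simp_all add: mem_app)
    done
qed

lemma hiok_eq:
  assumes "hiok h" "\<forall>a\<ge>31. h' a = h a"
  shows "hiok h'"
proof -
  have d: "DPa n q \<ge> 32" "TBa n q \<ge> 32" by (rule DPa_ge, rule TBa_ge)
  show ?thesis using assms d unfolding hiok_def hdat_def by auto
qed

lemma p2_exit0:
  assumes "base3 m" "m 12 = 0"
  shows "\<exists>m'. V (7 + K) (96, m) = V K (128, m') \<and> base3 m' \<and> m' 12 = real 0 \<and> m' 20 = 1
     \<and> m' 27 = real (DPa n q + 0*q) \<and> m' 28 = real (TBa n q + 0) \<and> m' 29 = real (OBa n q + 0) \<and> (\<forall>a\<ge>31. m' a = m a)"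
  using assms unfolding base3_def
  apply (subst VV_mem)
  apply (simp add: run del: of_nat_add of_nat_mult of_nat_Suc)
  apply (intro exI conjI)
   apply (rule refl)
  apply (simp_all add: mem_app)
  done

lemma p2_exit:
  assumes "inv2 0 m"
  shows "\<exists>m'. V (7 + K) (96, m) = V K (128, m') \<and> inv3 0 1 m'"
proof -
  have "base3 m" "m 12 = 0" using assms unfolding inv2_def by auto
  then obtain m' where m': "V (7 + K) (96, m) = V K (128, m')" "base3 m'" "m' 12 = real 0" "m' 20 = 1"
     "m' 27 = real (DPa n q + 0*q)" "m' 28 = real (TBa n q + 0)" "m' 29 = real (OBa n q + 0)" "\<forall>a\<ge>31. m' a = m a"
    using p2_exit0 by blast
  have "hiok m" using assms unfolding inv2_def hiok_def by auto
  hence "hiok m'" using hiok_eq m'(8) by blast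
  thus ?thesis using m' unfolding inv3_def by blast
qed

lemma hdat_upd_T:
  assumes "hdat i h" "i < n" "\<forall>a\<ge>31. h' a = (h(TBa n q + j := x)) a"
  shows "hdat i h'"
  unfolding hdat_def
proof (intro allI impI)
  fix c assume c: "c < q"
  have d: "DPa n q \<ge> 32" by (rule DPa_ge)
  have l: "DPa n q + i * q + c < TBa n q" "DPa n q + i * q + n * q + c < TBa n q"
    using addr_lt[OF assms(2) c] by auto
  show "h' (DPa n q + i * q + c) = P i c \<and> h' (DPa n q + i * q + n * q + c) = Q i c"
    using assms c d l unfolding hdat_def by auto
qed

lemma p2_outer:
  assumes T0: "Tsuf 0 < 1"
  shows "j \<le> n \<Longrightarrow> inv2 j m \<Longrightarrow> V (j * (11 * q + 14) + 7 + t3 0 + k) (96, m) = Phi3 0 1 (\<lambda>_. 0)"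
proof (induction j arbitrary: m)
  case 0
  obtain m' where m': "V (7 + (t3 0 + k)) (96, m) = V (t3 0 + k) (128, m')" "inv3 0 1 m'"
    using p2_exit[OF 0(2)] by blast
  have "V (0 * (11 * q + 14) + 7 + t3 0 + k) (96, m) = V (t3 0 + k) (128, m')"
    using m'(1) by (simp add: add.assoc)
  also have "\<dots> = Phi3 0 1 (\<lambda>j. m' (OBa n q + j))"
    by (rule p3_outer) (use m'(2) T0 in auto)
  also have "\<dots> = Phi3 0 1 (\<lambda>_. 0)" by (rule Phi3_cong) simp
  finally show ?case .
next
  case (Suc j)
  have j: "j < n" using Suc.prems by simp
  have I: "base3 m" "m 12 = real (Suc j)" "m 27 = real (DPa n q + j*q + q)" "m 28 = real (TBa n q + Suc j)"
    "\<forall>i<n. hdat i m" "\<forall>j'. Suc j \<le> j' \<longrightarrow> j' \<le> n \<longrightarrow> m (TBa n q + j') = Tsuf j'"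
    using Suc.prems unfolding inv2_def by (auto simp: algebra_simps)
  define K where "K = j * (11 * q + 14) + 7 + t3 0 + k"
  obtain m1 where m1: "V (7 + (11 * (q - 0) + 1 + (6 + K))) (96, m) = V (11 * (q - 0) + 1 + (6 + K)) (104, m1)"
    "inv2c j 0 0 m m1"
    using p2_pre[OF I(1-4)] by blast
  have hd: "hdat j m" using I(5) j by simp
  obtain m2 where m2: "V (11 * (q - 0) + 1 + (6 + K)) (104, m1) = V (6 + K) (117, m2)"
    "inv2c j q (0 + (\<Sum>c'\<in>{0..<q}. mn j c')) m m2"
    using p2_inner[OF hd, of 0 0 m1 "6 + K"] m1(2) by auto
  have T1: "m (TBa n q + Suc j) = Tsuf (Suc j)" using I(6)[rule_format, of "Suc j"] j by simp
  obtain m3 where m3: "V (6 + K) (117, m2) = V K (96, m3)" "base3 m3" "m3 12 = real j"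
     "m3 27 = real (DPa n q + j*q)" "m3 28 = real (TBa n q + j)"
     "\<forall>a\<ge>31. m3 a = (m(TBa n q + j := Tsuf (Suc j) * (0 + (\<Sum>c'\<in>{0..<q}. mn j c')))) a"
    using p2_post[OF m2(2) T1] by blast
  have inv: "inv2 j m3"
    unfolding inv2_def
  proof (intro conjI allI impI)
    show "base3 m3" "m3 12 = real j" "m3 27 = real (DPa n q + j*q)" "m3 28 = real (TBa n q + j)" by fact+
  next
    fix i assume "i < n" thus "hdat i m3" using hdat_upd_T[OF _ _ m3(6)] I(5) by blast
  next
    fix j' assume a: "j \<le> j'" "j' \<le> n"
    have t: "TBa n q \<ge> 32" by (rule TBa_ge)
    show "m3 (TBa n q + j') = Tsuf j'"
    proof (cases "j' = j")
      case True
      thus ?thesis using m3(6) t Tsuf_step[OF j] unfolding sm_def by (simp add: atLeast0LessThan mult.commute)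
    next
      case False
      hence "Suc j \<le> j'" using a by simp
      thus ?thesis using m3(6) t I(6) a False by simp
    qed
  qed
  have e: "Suc j * (11 * q + 14) + 7 + t3 0 + k = 7 + (11 * (q - 0) + 1 + (6 + K))"
    unfolding K_def by simp
  have "V (Suc j * (11 * q + 14) + 7 + t3 0 + k) (96, m) = V K (96, m3)"
    unfolding e m1(1) m2(1) m3(1) ..
  also have "\<dots> = Phi3 0 1 (\<lambda>_. 0)" unfolding K_def by (rule Suc.IH) (use j inv in auto)
  finally show ?case .
qed

end


lemma prog_save: "\<forall>j\<in>{2..<31::nat}. theprog ! (10 + 2*(j-2)) = Store 0 j \<and> theprog ! (11 + 2*(j-2)) = Arith Plus 0 0 1"
  by (simp add: prog_nth atLeastLessThan_nat_numeral)

context setting begin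

definition inv_s :: "nat \<Rightarrow> nat \<Rightarrow> (nat \<Rightarrow> real) \<Rightarrow> nat \<Rightarrow> (nat \<Rightarrow> real) \<Rightarrow> bool" where
  "inv_s B j M j0 m \<longleftrightarrow> m 0 = real (B + j) \<and> m 1 = 1 \<and> (\<forall>x. j \<le> x \<longrightarrow> x < 31 \<longrightarrow> m x = M x)
     \<and> (\<forall>x. 2 \<le> x \<longrightarrow> x < j \<longrightarrow> m (B + x) = M x) \<and> (\<forall>x. 31 \<le> x \<longrightarrow> x < B \<longrightarrow> m x = M x) \<and> m B = real q"

lemma save_reg:
  assumes "B \<ge> 32"
  shows "2 \<le> j \<Longrightarrow> j \<le> 31 \<Longrightarrow> inv_s B j M 0 m \<Longrightarrow>
    \<exists>m'. V (2 * (31 - j) + K) (10 + 2 * (j - 2), m) = V K (68, m') \<and> inv_s B 31 M 0 m'"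
proof (induction "31 - j" arbitrary: j m)
  case 0
  hence "j = 31" by simp
  thus ?case using 0 by auto
next
  case (Suc x)
  hence j: "j < 31" by simp
  have I: "theprog ! (10 + 2*(j-2)) = Store 0 j" "theprog ! (11 + 2*(j-2)) = Arith Plus 0 0 1"
    using prog_save[rule_format, of j] j Suc.prems by auto
  define m1 where "m1 = m(nat \<lfloor>m 0\<rfloor> := m j)"
  define m2 where "m2 = m1(0 := m1 0 + m1 1)"
  have pc: "Suc (Suc (10 + 2 * (j - 2))) = 10 + 2 * (Suc j - 2)" using Suc.prems by simp
  have e: "2 * (31 - j) + K = Suc (Suc (2 * (31 - Suc j) + K))" using j by simp
  have "V (2 * (31 - j) + K) (10 + 2 * (j - 2), m) = V (Suc (2 * (31 - Suc j) + K)) (Suc (10 + 2 * (j - 2)), m1)"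
    unfolding e m1_def by (rule VV_Store) (use j I in \<open>simp_all add: length_prog\<close>)
  also have "\<dots> = V (2 * (31 - Suc j) + K) (Suc (Suc (10 + 2 * (j - 2))), m2)"
    unfolding m2_def by (rule VV_Arith[where f=Plus, simplified]) (use j I in \<open>simp_all add: length_prog\<close>)
  also have "Suc (Suc (10 + 2 * (j - 2))) = 10 + 2 * (Suc j - 2)" by (rule pc)
  finally have st: "V (2 * (31 - j) + K) (10 + 2 * (j - 2), m) = V (2 * (31 - Suc j) + K) (10 + 2 * (Suc j - 2), m2)" .
  have inv: "inv_s B (Suc j) M 0 m2"
  proof -
    have m0: "nat \<lfloor>m 0\<rfloor> = B + j" using Suc.prems unfolding inv_s_def by simp
    show ?thesis using Suc.prems assms j unfolding inv_s_def m2_def m1_def m0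
      by (auto simp: less_Suc_eq)
  qed
  obtain m' where "V (2 * (31 - Suc j) + K) (10 + 2 * (Suc j - 2), m2) = V K (68, m')" "inv_s B 31 M 0 m'"
  proof -
    have x: "x = 31 - Suc j" using Suc.hyps(2) by simp
    have "2 \<le> Suc j" "Suc j \<le> 31" using Suc.prems j by auto
    from Suc.hyps(1)[OF x this inv] show ?thesis using that by blast
  qed
  thus ?case using st by auto
qed

lemma pn1: "theprog ! Suc 0 = Arith Plus 0 0 1" by (simp add: theprog_def)
lemma ss2: "Suc (Suc 0) = 2" by simp

lemma boot_head:
  assumes "m 0 = real n" "m 1 = real q"
  shows "\<exists>m'. V (10 + K) (0, m) = V K (10, m') \<and> m' 0 = real (Bq n q + 2) \<and> m' 1 = 1
    \<and> (\<forall>x. 2 \<le> x \<longrightarrow> x \<noteq> Bq n q \<longrightarrow> m' x = m x) \<and> m' (Bq n q) = real q"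
proof -
  have q0: "q \<noteq> 0" using q1 by simp
  have b: "Bq n q \<ge> 32"
  proof -
    have "16*(n+1)*q \<ge> 16*2*1" using n1 q1 by (intro mult_mono) auto
    thus ?thesis unfolding Bq_def by simp
  qed
  define X where "X = n * q + q"
  have eB: "((X + X) + (X + X)) + ((X + X) + (X + X)) + (((X + X) + (X + X)) + ((X + X) + (X + X))) = Bq n q"
    unfolding X_def Bq_def by (simp add: algebra_simps)
  show ?thesis
    using assms q0 b eB[unfolded X_def]
    apply (subst VV_mem)
    apply (simp add: run pn1 ss2 del: of_nat_add of_nat_mult of_nat_Suc)
    apply (intro exI conjI)
     apply (rule refl)
    apply (simp_all add: mem_app)
    done
qed

lemma rn8: "real (a + numeral k) - numeral k = real a" by simp

lemma setup1:
  assumes "m 0 = real (Bq n q + 31)" "m 1 = 1" "m (Bq n q) = real q"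
  shows "\<exists>m'. V (13 + K) (68, m) = V K (81, m') \<and> m' 0 = real (Bq n q + 31) \<and> m' 1 = 1 \<and> m' 2 = real 31
     \<and> m' 3 = real (Bq n q) \<and> m' 4 = real q \<and> m' 6 = real n \<and> m' 7 = real (n*q) \<and> m' 8 = real (2*n*q+2)
     \<and> (\<forall>a\<ge>31. m' a = m a)"
proof -
  have q0: "q \<noteq> 0" using q1 by simp
  have b: "Bq n q \<ge> 32"
  proof -
    have "16*(n+1)*q \<ge> 16*2*1" using n1 q1 by (intro mult_mono) auto
    thus ?thesis unfolding Bq_def by simp
  qed
  define Z where "Z = q + q"
  have eZ: "real (Bq n q) / real ((Z + Z) + (Z + Z) + ((Z + Z) + (Z + Z))) = real (n + 1)"
    unfolding Z_def Bq_def using q0 by (simp add: field_simps)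
  show ?thesis
    using assms q0 b eZ[unfolded Z_def]
    apply (subst VV_mem)
    apply (simp add: run rn8 del: of_nat_add of_nat_mult of_nat_Suc)
    apply (intro exI conjI)
     apply (rule refl)
    apply (simp_all add: mem_app)
    done
qed

definition regs_c :: "nat \<Rightarrow> (nat \<Rightarrow> real) \<Rightarrow> bool" where
  "regs_c j m \<longleftrightarrow> m 0 = real (Bq n q + j) \<and> m 1 = 1 \<and> m 2 = real j \<and> m 3 = real (Bq n q) \<and> m 4 = real q
     \<and> m 6 = real n \<and> m 7 = real (n*q) \<and> m 8 = real (2*n*q+2)"

definition inv_c :: "nat \<Rightarrow> (nat \<Rightarrow> real) \<Rightarrow> bool" where
  "inv_c j m \<longleftrightarrow> regs_c j m \<and> (\<forall>x. 2 \<le> x \<longrightarrow> x < j \<longrightarrow> x < 2+2*n*q \<longrightarrow> m (Bq n q + x) = input_mem n q P Q x)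
     \<and> (\<forall>x. j \<le> x \<longrightarrow> x < 2+2*n*q \<longrightarrow> m x = input_mem n q P Q x)"

lemma Bq_ge: "Bq n q \<ge> 32"
proof -
  have "16*(n+1)*q \<ge> 16*2*1" using n1 q1 by (intro mult_mono) auto
  thus ?thesis unfolding Bq_def by simp
qed

lemma Bq_gt: "Bq n q \<ge> 2 + 2*n*q"
proof -
  have "16*(n+1)*q \<ge> 2*n*q + 2*q" by (simp add: algebra_simps)
  moreover have "2*q \<ge> 2" using q1 by simp
  ultimately show ?thesis unfolding Bq_def by simp
qed

lemma copy_body:
  assumes "regs_c j m" "j < 2*n*q+2" "31 \<le> j"
  shows "\<exists>m'. V (6 + K) (81, m) = V K (81, m') \<and> regs_c (j+1) m' \<and> (\<forall>a\<ge>31. m' a = (m(Bq n q + j := m j)) a)"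
  using assms Bq_ge unfolding regs_c_def
  apply (subst VV_mem)
  apply (simp add: run del: of_nat_add of_nat_mult of_nat_Suc)
  apply (intro exI conjI)
   apply (rule refl)
  apply (simp_all add: mem_app)
  done

lemma copy_exit:
  assumes "regs_c j m" "2*n*q+2 \<le> j"
  shows "V (Suc K) (81, m) = V K (87, m)"
proof -
  have "m 8 \<le> m 2" using assms unfolding regs_c_def by (simp only: of_nat_le_iff)
  thus ?thesis by (simp add: VV_step length_prog prog_nth)
qed

lemma copy_loop:
  "31 \<le> j \<Longrightarrow> inv_c j m \<Longrightarrow> \<exists>m'. V (6 * (2*n*q+2 - j) + 1 + K) (81, m) = V K (87, m')
      \<and> (\<exists>j'. regs_c j' m') \<and> (\<forall>x. 2 \<le> x \<longrightarrow> x < 2+2*n*q \<longrightarrow> m' (Bq n q + x) = input_mem n q P Q x)"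
proof (induction "2*n*q+2 - j" arbitrary: j m)
  case 0
  hence j: "2*n*q+2 \<le> j" by simp
  have "V (6 * (2*n*q+2 - j) + 1 + K) (81, m) = V K (87, m)"
    using copy_exit[of j m K] 0 j unfolding inv_c_def by simp
  thus ?case using 0 j unfolding inv_c_def by auto
next
  case (Suc x)
  hence j: "j < 2*n*q+2" by simp
  obtain m1 where m1: "V (6 + (6 * (2*n*q+2 - Suc j) + 1 + K)) (81, m) = V (6 * (2*n*q+2 - Suc j) + 1 + K) (81, m1)"
    "regs_c (j+1) m1" "\<forall>a\<ge>31. m1 a = (m(Bq n q + j := m j)) a"
    using copy_body[of j m] Suc.prems j unfolding inv_c_def by blast
  have b: "Bq n q \<ge> 32" "Bq n q \<ge> 2 + 2*n*q" by (rule Bq_ge, rule Bq_gt)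
  have inv: "inv_c (Suc j) m1"
    unfolding inv_c_def
  proof (intro conjI allI impI)
    show "regs_c (Suc j) m1" using m1(2) by simp
  next
    fix y assume y: "2 \<le> y" "y < Suc j" "y < 2+2*n*q"
    have "m1 (Bq n q + y) = (m(Bq n q + j := m j)) (Bq n q + y)" using m1(3) b by simp
    thus "m1 (Bq n q + y) = input_mem n q P Q y"
      using Suc.prems y unfolding inv_c_def by (cases "y = j") auto
  next
    fix y assume y: "Suc j \<le> y" "y < 2+2*n*q"
    have "m1 y = (m(Bq n q + j := m j)) y" using m1(3) Suc.prems(1) y by simp
    thus "m1 y = input_mem n q P Q y" using Suc.prems y b unfolding inv_c_def by auto
  qed
  obtain m' where m': "V (6 * (2*n*q+2 - Suc j) + 1 + K) (81, m1) = V K (87, m')"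
      "(\<exists>j'. regs_c j' m') \<and> (\<forall>x. 2 \<le> x \<longrightarrow> x < 2+2*n*q \<longrightarrow> m' (Bq n q + x) = input_mem n q P Q x)"
  proof -
    have x: "x = 2*n*q+2 - Suc j" using Suc.hyps(2) by simp
    have "31 \<le> Suc j" using Suc.prems by simp
    from Suc.hyps(1)[OF x this inv] show ?thesis using that by blast
  qed
  have e: "6 * (2*n*q+2 - j) + 1 + K = 6 + (6 * (2*n*q+2 - Suc j) + 1 + K)" using j by simp
  show ?case using m'(2) unfolding e m1(1) m'(1) by blast
qed

lemma setup2:
  assumes "regs_c j m"
  shows "\<exists>m'. V (9 + K) (87, m) = V K (96, m') \<and> base3 m' \<and> m' 12 = real n \<and> m' 27 = real (DPa n q + n*q)
     \<and> m' 28 = real (TBa n q + n) \<and> (\<forall>a\<ge>31. m' a = (m(TBa n q + n := 1)) a)"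
proof -
  have b: "Bq n q \<ge> 32" by (rule Bq_ge)
  show ?thesis
    using assms b unfolding regs_c_def
    apply (subst VV_mem)
    apply (simp add: run del: of_nat_add of_nat_mult of_nat_Suc)
    apply (intro exI conjI)
     apply (rule refl)
    apply (simp_all add: mem_app base3_def DPa_def TBa_def OBa_def setr_def)
    done
qed

lemma input_P: "i < n \<Longrightarrow> c < q \<Longrightarrow> input_mem n q P Q (2 + i*q + c) = P i c"
proof -
  assume a: "i < n" "c < q"
  have l: "i*q + c < n*q" by (rule iq_lt[OF a])
  have d: "(i*q + c) div q = i" "(i*q + c) mod q = c" using a by auto
  show ?thesis unfolding input_mem_def using l d by simp
qed

lemma input_Q: "i < n \<Longrightarrow> c < q \<Longrightarrow> input_mem n q P Q (2 + n*q + i*q + c) = Q i c"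
proof -
  assume a: "i < n" "c < q"
  have l: "i*q + c < n*q" by (rule iq_lt[OF a])
  have d: "(i*q + c) div q = i" "(i*q + c) mod q = c" using a by auto
  show ?thesis unfolding input_mem_def using l d by (simp add: algebra_simps)
qed

end


context setting begin

definition Ttot :: nat where
  "Ttot = 10 + (2 * (31 - 2) + (13 + (6 * (2*n*q+2 - 31) + 1 + (9 + (n * (11 * q + 14) + 7 + t3 0)))))"

lemma main_locale:
  assumes T0: "Tsuf 0 < 1"
  shows "V (Ttot + k) (0, input_mem n q P Q) = Phi3 0 1 (\<lambda>_. 0)"
proof -
  define M where "M = input_mem n q P Q"
  define B where "B = Bq n q"
  have b: "B \<ge> 32" "B \<ge> 2 + 2*n*q" unfolding B_def by (rule Bq_ge, rule Bq_gt)
  define K5 where "K5 = n * (11 * q + 14) + 7 + t3 0 + k"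
  define K4 where "K4 = 9 + K5"
  define K3 where "K3 = 6 * (2*n*q+2 - 31) + 1 + K4"
  define K2 where "K2 = 13 + K3"
  define K1 where "K1 = 2 * (31 - 2) + K2"
  have tt: "Ttot + k = 10 + K1" unfolding Ttot_def K1_def K2_def K3_def K4_def K5_def by simp
  have M01: "M 0 = real n" "M 1 = real q" unfolding M_def input_mem_def by auto
  obtain m1 where m1: "V (10 + K1) (0, M) = V K1 (10, m1)" "m1 0 = real (B + 2)" "m1 1 = 1"
    "\<forall>x. 2 \<le> x \<longrightarrow> x \<noteq> B \<longrightarrow> m1 x = M x" "m1 B = real q"
    using boot_head[OF M01] unfolding B_def by blast
  have s1: "inv_s B 2 M 0 m1" unfolding inv_s_def using m1 b by auto
  obtain m2 where m2: "V (2 * (31 - 2) + K2) (10 + 2 * (2 - 2), m1) = V K2 (68, m2)" "inv_s B 31 M 0 m2"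
    using save_reg[OF b(1), of 2 M m1 K2] s1 by auto
  have m2f: "m2 0 = real (Bq n q + 31)" "m2 1 = 1" "m2 (Bq n q) = real q"
    using m2(2) unfolding inv_s_def B_def by auto
  obtain m3 where m3: "V (13 + K3) (68, m2) = V K3 (81, m3)" "m3 0 = real (Bq n q + 31)" "m3 1 = 1" "m3 2 = real 31"
     "m3 3 = real (Bq n q)" "m3 4 = real q" "m3 6 = real n" "m3 7 = real (n*q)" "m3 8 = real (2*n*q+2)"
     "\<forall>a\<ge>31. m3 a = m2 a"
    using setup1[OF m2f] by blast
  have c3: "inv_c 31 m3"
    unfolding inv_c_def regs_c_def
  proof (intro conjI allI impI)
    fix x assume x: "2 \<le> x" "x < 31" "x < 2 + 2*n*q"
    have "m3 (Bq n q + x) = m2 (B + x)" using m3(10) b unfolding B_def by simp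
    thus "m3 (Bq n q + x) = input_mem n q P Q x" using m2(2) x unfolding inv_s_def M_def by auto
  next
    fix x assume x: "31 \<le> x" "x < 2 + 2*n*q"
    have "m3 x = m2 x" using m3(10) x by simp
    thus "m3 x = input_mem n q P Q x" using m2(2) x b unfolding inv_s_def M_def by auto
  qed (use m3 in auto)
  obtain m4 j' where m4: "V (6 * (2*n*q+2 - 31) + 1 + K4) (81, m3) = V K4 (87, m4)" "regs_c j' m4"
     "\<forall>x. 2 \<le> x \<longrightarrow> x < 2+2*n*q \<longrightarrow> m4 (Bq n q + x) = input_mem n q P Q x"
    using copy_loop[OF _ c3, of K4] by auto
  obtain m5 where m5: "V (9 + K5) (87, m4) = V K5 (96, m5)" "base3 m5" "m5 12 = real n" "m5 27 = real (DPa n q + n*q)"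
     "m5 28 = real (TBa n q + n)" "\<forall>a\<ge>31. m5 a = (m4(TBa n q + n := 1)) a"
    using setup2[OF m4(2)] by blast
  have i2: "inv2 n m5"
    unfolding inv2_def
  proof (intro conjI allI impI)
    fix i assume i: "i < n"
    show "hdat i m5" unfolding hdat_def
    proof (intro allI impI conjI)
      fix c assume c: "c < q"
      have l: "DPa n q + i * q + c < TBa n q" "DPa n q + i * q + n * q + c < TBa n q" using addr_lt[OF i c] by auto
      have d: "DPa n q \<ge> 32" by (rule DPa_ge)
      have e1: "DPa n q + i * q + c = Bq n q + (2 + i*q + c)" unfolding DPa_def by simp
      have e2: "DPa n q + i * q + n * q + c = Bq n q + (2 + n*q + i*q + c)" unfolding DPa_def by simp
      have r1: "2 + i*q + c < 2 + 2*n*q" "2 + n*q + i*q + c < 2 + 2*n*q" using iq_lt[OF i c] by auto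
      have "m5 (DPa n q + i * q + c) = m4 (DPa n q + i * q + c)" using m5(6) l d by simp
      also have "\<dots> = P i c" unfolding e1 using m4(3)[rule_format, OF _ r1(1)] input_P[OF i c] by simp
      finally show "m5 (DPa n q + i * q + c) = P i c" .
      have "m5 (DPa n q + i * q + n * q + c) = m4 (DPa n q + i * q + n * q + c)" using m5(6) l d by simp
      also have "\<dots> = Q i c" unfolding e2 using m4(3)[rule_format, OF _ r1(2)] input_Q[OF i c] by simp
      finally show "m5 (DPa n q + i * q + n * q + c) = Q i c" .
    qed
  next
    fix j assume j: "n \<le> j" "j \<le> n"
    have t: "TBa n q \<ge> 32" by (rule TBa_ge)
    show "m5 (TBa n q + j) = Tsuf j" using j m5(6) t Tsuf_n by auto
  qed (use m5 in auto)
  have "V (Ttot + k) (0, input_mem n q P Q) = V (10 + K1) (0, M)" by (simp add: tt M_def)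
  also have "\<dots> = V K1 (10, m1)" by (rule m1(1))
  also have "\<dots> = V K2 (68, m2)" using m2(1) unfolding K1_def by simp
  also have "\<dots> = V K3 (81, m3)" unfolding K2_def by (rule m3(1))
  also have "\<dots> = V K4 (87, m4)" unfolding K3_def by (rule m4(1))
  also have "\<dots> = V K5 (96, m5)" unfolding K4_def by (rule m5(1))
  also have "\<dots> = Phi3 0 1 (\<lambda>_. 0)" unfolding K5_def by (rule p2_outer[OF T0 _ i2]) simp
  finally show ?thesis .
qed

end


context setting begin

lemma T0_lt:
  assumes "\<exists>w'\<in>cube n q. prod_mass n P w' \<noteq> prod_mass n Q w'"
  shows "Tsuf 0 < 1"
proof (rule ccontr)
  assume "\<not> Tsuf 0 < 1"
  hence T1: "Tsuf 0 = 1" using Tsuf_bounds[of 0] by simp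
  have PQ: "P k c = Q k c" if k: "k < n" and c: "c < q" for k c
  proof -
    have "sm k = 1"
      by (rule prod_eq1_each[of "{0..<n}" sm]) (use T1 k sm_bounds in \<open>auto simp: Tsuf_def\<close>)
    hence "(\<Sum>c<q. min (P k c) (Q k c)) = 1" unfolding sm_def mn_def .
    moreover have "is_dist q (P k)" "is_dist q (Q k)" using dP dQ k unfolding is_product_dist_def by auto
    ultimately show ?thesis using sum_min_eq1[of q "P k" "Q k" c] c by simp
  qed
  from assms obtain w' where w': "w' \<in> cube n q" "prod_mass n P w' \<noteq> prod_mass n Q w'" by blast
  have "prod_mass n P w' = prod_mass n Q w'"
    unfolding prod_mass_def using w'(1) PQ unfolding cube_def by (intro prod.cong) auto
  thus False using w'(2) by simp
qed

lemma Phi3_pi: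
  assumes "is_greedy_coupling n q P Q Cpl"
  shows "Phi3 0 1 (\<lambda>_. 0) = pi_cond n q Cpl w"
  unfolding pi_cond_formula[OF assms dP wc] Phi3_def PP_def MM_def Tsuf_def sm_def mn_def
  by (simp add: atLeast0LessThan)

lemma Ttot_bound: "Ttot \<le> 400 * q * n"
proof -
  have a: "1 \<le> n * q" using n1 q1 by simp
  have b: "n \<le> n * q" using q1 by simp
  have "Ttot \<le> 91 + (12 * (n * q) + 12) + 10 + (11 * (n * q) + 14 * n) + 7 + (29 * (n * q) + 23 * n + 6 * n + 101)"
    unfolding Ttot_def t3_def by (simp add: algebra_simps)
  also have "\<dots> \<le> 400 * (n * q)" using a b by linarith
  finally show ?thesis by (simp add: algebra_simps)
qed

end

theorem lemma3p1:
  "\<exists>(prog :: instr list) (C :: nat).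
     \<forall>n q P Q Cpl.
       1 \<le> n \<longrightarrow> 1 \<le> q \<longrightarrow>
       is_product_dist n q P \<longrightarrow> is_product_dist n q Q \<longrightarrow>
       (\<exists>w\<in>cube n q. prod_mass n P w \<noteq> prod_mass n Q w) \<longrightarrow>
       is_greedy_coupling n q P Q Cpl \<longrightarrow>
       (\<forall>w\<in>cube n q.
          measure_pmf.prob (exec prog (C * q * n) (0, input_mem n q P Q)) (outputs prog n w)
            = pi_cond n q Cpl w)"
proof (intro exI[of _ theprog] exI[of _ 400] allI impI ballI)
  fix n q P Q Cpl w
  assume n1: "1 \<le> n" and q1: "1 \<le> q" and dP: "is_product_dist n q P" and dQ: "is_product_dist n q Q"
    and ne: "\<exists>w\<in>cube n q. prod_mass n P w \<noteq> prod_mass n Q w" and g: "is_greedy_coupling n q P Q Cpl"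
    and w: "w \<in> cube n q"
  interpret S: setting n q P Q w using n1 q1 dP dQ w by unfold_locales
  have e: "400 * q * n = S.Ttot + (400 * q * n - S.Ttot)" using S.Ttot_bound by simp
  have "measure_pmf.prob (exec theprog (400 * q * n) (0, input_mem n q P Q)) (outputs theprog n w)
      = VV theprog (outputs theprog n w) (S.Ttot + (400 * q * n - S.Ttot)) (0, input_mem n q P Q)"
    unfolding VV_def using e by simp
  also have "\<dots> = S.Phi3 0 1 (\<lambda>_. 0)" by (rule S.main_locale[OF S.T0_lt[OF ne]])
  also have "\<dots> = pi_cond n q Cpl w" by (rule S.Phi3_pi[OF g])
  finally show "measure_pmf.prob (exec theprog (400 * q * n) (0, input_mem n q P Q)) (outputs theprog n w)
      = pi_cond n q Cpl w" .
qed


end
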